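(* Let $\mathcal M$ be a $\Sigma$-module over a field $\mathbb F$ and $(A,f)$ an object of $\Gamma(\mathcal M)_{mod}$. For all $n\ge0$, ${\underline r}\in\mathrm{Comp}_p(n)$ and $x\in\mathcal M(n)^{\Sigma_{\underline r}}$ define $\beta_{x,{\underline r}}:A^{\times p}\to A$ by $$\beta_{x,{\underline r}}(a_1,\dots,a_p)=f\Big(\sum_{\sigma\in\Sigma_n/\Sigma_{\underline r}}\sigma\cdot x\otimes\sigma\cdot\big(a_1^{\otimes r_1}\otimes\dots\otimes a_p^{\otimes r_p}\big)\Big).$$ Then $(A,\beta)$ is an object of $\beta(\mathcal M)$ (i.e. the operations satisfy relations ($\beta$1)–($\beta$6)), and $(A,f)\mapsto(A,\beta)$, identity on morphisms, extends to a functor $F_{\mathcal M}:\Gamma(\mathcal M)_{mod}\to\beta(\mathcal M)$.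
   Context: $[n]=\{1,\dots,n\}$. A $\Sigma$-module $\mathcal M$: representations $\mathcal M(n)$ of $\Sigma_n$. $\Gamma(\mathcal M,V)=\bigoplus_{n\ge0}(\mathcal M(n)\otimes V^{\otimes n})^{\Sigma_n}$ (diagonal action, permutation of factors on $V^{\otimes n}$). $\Gamma(\mathcal M)_{mod}$: objects $(A,f)$ with $f:\Gamma(\mathcal M,A)\to A$ linear; morphisms linear $g$ with $f'\circ\Gamma(\mathcal M,g)=g\circ f$. Compositions ${\underline r}\in\mathrm{Comp}_p(n)$: nonnegative $p$-tuples with sum $n$, identified with partitions of $[n]$ into consecutive intervals ${\underline r}_i$ of lengths $r_i$; $\Sigma_{\underline r}\subseteq\Sigma_n$ preserves each ${\underline r}_i$. Sums over $G/H$ run over left coset representatives. For $\rho\in\Sigma_p$: ${\underline r}^\rho=(r_{\rho^{-1}(1)},\dots,r_{\rho^{-1}(p)})$ and $\rho^*\in\Sigma_n$ the associated block permutation with blocks of sizes $r_i$. For ${\underline q}\in\mathrm{Comp}_s(p)$: ${\underline q}\rhd{\underline r}=(\sum_{i\in{\underline q}_j}r_i)_{j\in[s]}$. ${\underline r}\circ_1(l,m)=(l,m,r_2,\dots,r_p)$. $\beta(\mathcal M)$: objects $(A,\beta)$ with $\beta_{x,{\underline r}}:A^{\times p}\to A$ for ${\underline r}\in\mathrm{Comp}_p(n)$, $x\in\mathcal M(n)^{\Sigma_{\underline r}}$ satisfying ($\beta$1) $\beta_{x,{\underline r}}(a_1,\dots,a_p)=\beta_{\rho^*\cdot x,{\underline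 r}^\rho}(a_{\rho^{-1}(1)},\dots,a_{\rho^{-1}(p)})$ for $\rho\in\Sigma_p$; ($\beta$2) $\beta_{x,(0,r_1,\dots,r_p)}(a_0,\dots,a_p)=\beta_{x,(r_1,\dots,r_p)}(a_1,\dots,a_p)$; ($\beta$3) $\beta_{x,{\underline r}}(\lambda a_1,a_2,\dots)=\lambda^{r_1}\beta_{x,{\underline r}}(a_1,a_2,\dots)$; ($\beta$4) for ${\underline q}\in\mathrm{Comp}_s(p)$, $\beta_{x,{\underline r}}$ at ($a_1$ repeated $q_1$ times, …, $a_s$ repeated $q_s$ times) equals $\beta_{\sum_{\sigma\in\Sigma_{{\underline q}\rhd{\underline r}}/\Sigma_{\underline r}}\sigma\cdot x,{\underline q}\rhd{\underline r}}(a_1,\dots,a_s)$; ($\beta$5) $\beta_{x,{\underline r}}(a_0+a_1,a_2,\dots,a_p)=\sum_{l+m=r_1}\beta_{x,{\underline r}\circ_1(l,m)}(a_0,a_1,\dots,a_p)$; ($\beta$6) $\beta_{\lambda x+y,{\underline r}}=\lambda\beta_{x,{\underline r}}+\beta_{y,{\underline r}}$. Morphisms: linear maps commuting with all operations. *)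

theory Defs
  imports Complex_Main "HOL-Library.Function_Algebras" "HOL-Combinatorics.Permutations"
begin

(* Conventions: [n] is rendered as {0..<n} (0-based); permutations are *)
(* functions nat => nat with  sigma permutes {0..<n}.  Tuples/compositions *)
(* are lists; (a_1,...,a_p) is a list of length p.                      *)

text \<open>A Sigma-module over the field 'k: the representations M(n) are subspaces
  M n of an ambient 'k-vector space 'm; act n sigma is the action of Sigma_n on M(n).\<close>
definition sigma_module ::
  "('k::field \<Rightarrow> 'm::ab_group_add \<Rightarrow> 'm) \<Rightarrow> (nat \<Rightarrow> 'm set) \<Rightarrow> (nat \<Rightarrow> (nat \<Rightarrow> nat) \<Rightarrow> 'm \<Rightarrow> 'm) \<Rightarrow> bool"
  where "sigma_module sM M act \<longleftrightarrow>
    vector_space sM \<and>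
    (\<forall>n. module.subspace sM (M n)) \<and>
    (\<forall>n \<sigma>. \<sigma> permutes {0..<n} \<longrightarrow>
        (\<forall>x\<in>M n. act n \<sigma> x \<in> M n) \<and>
        (\<forall>x\<in>M n. \<forall>y\<in>M n. act n \<sigma> (x + y) = act n \<sigma> x + act n \<sigma> y) \<and>
        (\<forall>x\<in>M n. \<forall>c. act n \<sigma> (sM c x) = sM c (act n \<sigma> x))) \<and>
    (\<forall>n. \<forall>x\<in>M n. act n id x = x) \<and>
    (\<forall>n \<sigma> \<tau>. \<sigma> permutes {0..<n} \<longrightarrow> \<tau> permutes {0..<n} \<longrightarrow>
        (\<forall>x\<in>M n. act n (\<sigma> \<circ> \<tau>) x = act n \<sigma> (act n \<tau> x)))"

definition Comp :: "nat \<Rightarrow> nat \<Rightarrow> nat list set"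
  where "Comp p n = {r. length r = p \<and> sum_list r = n}"

definition blk :: "nat list \<Rightarrow> nat \<Rightarrow> nat set"
  where "blk r i = {sum_list (take i r) ..< sum_list (take (Suc i) r)}"

definition Sym :: "nat \<Rightarrow> (nat \<Rightarrow> nat) set"
  where "Sym n = {\<sigma>. \<sigma> permutes {0..<n}}"

definition Young :: "nat list \<Rightarrow> (nat \<Rightarrow> nat) set"
  where "Young r = {\<sigma>. \<sigma> permutes {0..<sum_list r} \<and> (\<forall>i<length r. \<sigma> ` blk r i = blk r i)}"

definition Minv :: "(nat \<Rightarrow> 'm set) \<Rightarrow> (nat \<Rightarrow> (nat \<Rightarrow> nat) \<Rightarrow> 'm \<Rightarrow> 'm) \<Rightarrow> nat list \<Rightarrow> 'm set"
  where "Minv M act r = {x \<in> M (sum_list r). \<forall>\<tau>\<in>Young r. act (sum_list r) \<tau> x = x}"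

definition coset_sum :: "(nat \<Rightarrow> nat) set \<Rightarrow> (nat \<Rightarrow> nat) set \<Rightarrow> ((nat \<Rightarrow> nat) \<Rightarrow> 'b::comm_monoid_add) \<Rightarrow> 'b"
  where "coset_sum G H f = (\<Sum>C\<in>{(\<lambda>\<tau>. \<sigma> \<circ> \<tau>) ` H | \<sigma>. \<sigma> \<in> G}. f (SOME \<sigma>. \<sigma> \<in> C))"

definition comp_perm :: "(nat \<Rightarrow> nat) \<Rightarrow> 'a list \<Rightarrow> 'a list"
  where "comp_perm \<rho> r = permute_list (inv \<rho>) r"

text \<open>rho^*: the block permutation of [n] sending the i-th interval of r (order
  preservingly) onto the rho(i)-th interval of r^rho.\<close>
definition block_perm :: "nat list \<Rightarrow> (nat \<Rightarrow> nat) \<Rightarrow> nat \<Rightarrow> nat"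
  where "block_perm r \<rho> j =
    (if j < sum_list r then
       (let i = (THE i. i < length r \<and> j \<in> blk r i)
        in sum_list (take (\<rho> i) (comp_perm \<rho> r)) + (j - sum_list (take i r)))
     else j)"

definition comp_merge :: "nat list \<Rightarrow> nat list \<Rightarrow> nat list"
  where "comp_merge q r = map (\<lambda>j. \<Sum>i\<in>blk q j. r ! i) [0..<length q]"

definition rep_word :: "nat list \<Rightarrow> 'a list \<Rightarrow> 'a list"
  where "rep_word r as = concat (map (\<lambda>i. replicate (r ! i) (as ! i)) [0..<length r])"

text \<open>Free 'k-vector space on the generators (x, [a_1,...,a_n]) with x in M(n),
  standing for x (x) a_1 (x) ... (x) a_n; elements are finitely supported functions.\<close>
definition free_gen :: "'g \<Rightarrow> 'g \<Rightarrow> 'k::field"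
  where "free_gen g = (\<lambda>h. if h = g then 1 else 0)"

definition fscale :: "'k::field \<Rightarrow> ('g \<Rightarrow> 'k) \<Rightarrow> ('g \<Rightarrow> 'k)"
  where "fscale c v = (\<lambda>g. c * v g)"

definition Free :: "(nat \<Rightarrow> 'm set) \<Rightarrow> ('m \<times> 'a list \<Rightarrow> 'k::field) set"
  where "Free M = {v. finite {g. v g \<noteq> 0} \<and> (\<forall>g. v g \<noteq> 0 \<longrightarrow> fst g \<in> M (length (snd g)))}"

definition push :: "('g \<Rightarrow> 'h) \<Rightarrow> ('g \<Rightarrow> 'k::field) \<Rightarrow> ('h \<Rightarrow> 'k)"
  where "push \<phi> v = (\<lambda>h. \<Sum>g\<in>{g. v g \<noteq> 0 \<and> \<phi> g = h}. v g)"

text \<open>Multilinearity relations; the tensor product (+)_n M(n) (x) A^{(x)n} is Free M / Rel.\<close>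
definition Rel_gens ::
  "('k::field \<Rightarrow> 'm::ab_group_add \<Rightarrow> 'm) \<Rightarrow> (nat \<Rightarrow> 'm set) \<Rightarrow> ('k \<Rightarrow> 'a::ab_group_add \<Rightarrow> 'a) \<Rightarrow> ('m \<times> 'a list \<Rightarrow> 'k) set"
  where "Rel_gens sM M sA =
    {free_gen (x + y, as) - free_gen (x, as) - free_gen (y, as) | x y as.
        x \<in> M (length as) \<and> y \<in> M (length as)} \<union>
    {free_gen (sM c x, as) - fscale c (free_gen (x, as)) | c x as. x \<in> M (length as)} \<union>
    {free_gen (x, as[i := a + b]) - free_gen (x, as[i := a]) - free_gen (x, as[i := b]) | x as i a b.
        x \<in> M (length as) \<and> i < length as} \<union>
    {free_gen (x, as[i := sA c (as ! i)]) - fscale c (free_gen (x, as)) | x as i c.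
        x \<in> M (length as) \<and> i < length as}"

definition Rel ::
  "('k::field \<Rightarrow> 'm::ab_group_add \<Rightarrow> 'm) \<Rightarrow> (nat \<Rightarrow> 'm set) \<Rightarrow> ('k \<Rightarrow> 'a::ab_group_add \<Rightarrow> 'a) \<Rightarrow> ('m \<times> 'a list \<Rightarrow> 'k) set"
  where "Rel sM M sA = module.span fscale (Rel_gens sM M sA)"

definition gen_act :: "(nat \<Rightarrow> (nat \<Rightarrow> nat) \<Rightarrow> 'm \<Rightarrow> 'm) \<Rightarrow> nat \<Rightarrow> (nat \<Rightarrow> nat) \<Rightarrow> 'm \<times> 'a list \<Rightarrow> 'm \<times> 'a list"
  where "gen_act act n \<sigma> g =
    (if length (snd g) = n then (act n \<sigma> (fst g), permute_list (inv \<sigma>) (snd g)) else g)"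

text \<open>Representatives of the Sigma_n-invariant classes (degreewise); Gamma(M,A) = Inv / Rel.\<close>
definition Inv ::
  "('k::field \<Rightarrow> 'm::ab_group_add \<Rightarrow> 'm) \<Rightarrow> (nat \<Rightarrow> 'm set) \<Rightarrow> (nat \<Rightarrow> (nat \<Rightarrow> nat) \<Rightarrow> 'm \<Rightarrow> 'm) \<Rightarrow>
   ('k \<Rightarrow> 'a::ab_group_add \<Rightarrow> 'a) \<Rightarrow> ('m \<times> 'a list \<Rightarrow> 'k) set"
  where "Inv sM M act sA = {v \<in> Free M. \<forall>n \<sigma>. \<sigma> permutes {0..<n} \<longrightarrow>
                                push (gen_act act n \<sigma>) v - v \<in> Rel sM M sA}"

text \<open>Objects (A,f) of Gamma(M)_mod: f is a linear map Gamma(M,A) = Inv/Rel -> A, given by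
  a lift F that is linear on Inv and vanishes on Rel.\<close>
definition gamma_obj ::
  "('k::field \<Rightarrow> 'm::ab_group_add \<Rightarrow> 'm) \<Rightarrow> (nat \<Rightarrow> 'm set) \<Rightarrow> (nat \<Rightarrow> (nat \<Rightarrow> nat) \<Rightarrow> 'm \<Rightarrow> 'm) \<Rightarrow>
   ('k \<Rightarrow> 'a::ab_group_add \<Rightarrow> 'a) \<Rightarrow> (('m \<times> 'a list \<Rightarrow> 'k) \<Rightarrow> 'a) \<Rightarrow> bool"
  where "gamma_obj sM M act sA F \<longleftrightarrow>
    vector_space sA \<and>
    (\<forall>v\<in>Inv sM M act sA. \<forall>w\<in>Inv sM M act sA. F (v + w) = F v + F w) \<and>
    (\<forall>v\<in>Inv sM M act sA. \<forall>c. F (fscale c v) = sA c (F v)) \<and>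
    (\<forall>v\<in>Rel sM M sA. F v = 0)"

definition gamma_map :: "('a \<Rightarrow> 'b) \<Rightarrow> ('m \<times> 'a list \<Rightarrow> 'k::field) \<Rightarrow> ('m \<times> 'b list \<Rightarrow> 'k)"
  where "gamma_map g v = push (\<lambda>(x, as). (x, map g as)) v"

definition gamma_mor ::
  "('k::field \<Rightarrow> 'm::ab_group_add \<Rightarrow> 'm) \<Rightarrow> (nat \<Rightarrow> 'm set) \<Rightarrow> (nat \<Rightarrow> (nat \<Rightarrow> nat) \<Rightarrow> 'm \<Rightarrow> 'm) \<Rightarrow>
   ('k \<Rightarrow> 'a::ab_group_add \<Rightarrow> 'a) \<Rightarrow> (('m \<times> 'a list \<Rightarrow> 'k) \<Rightarrow> 'a) \<Rightarrow>
   ('k \<Rightarrow> 'b::ab_group_add \<Rightarrow> 'b) \<Rightarrow> (('m \<times> 'b list \<Rightarrow> 'k) \<Rightarrow> 'b) \<Rightarrow> ('a \<Rightarrow> 'b) \<Rightarrow> bool"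
  where "gamma_mor sM M act sA F sB F' g \<longleftrightarrow>
    Vector_Spaces.linear sA sB g \<and> (\<forall>v\<in>Inv sM M act sA. F' (gamma_map g v) = g (F v))"

definition beta_of ::
  "(nat \<Rightarrow> (nat \<Rightarrow> nat) \<Rightarrow> 'm \<Rightarrow> 'm) \<Rightarrow> (('m \<times> 'a list \<Rightarrow> 'k::field) \<Rightarrow> 'a) \<Rightarrow> 'm \<Rightarrow> nat list \<Rightarrow> 'a list \<Rightarrow> 'a"
  where "beta_of act F x r as =
    F (coset_sum (Sym (sum_list r)) (Young r)
        (\<lambda>\<sigma>. free_gen (act (sum_list r) \<sigma> x, permute_list (inv \<sigma>) (rep_word r as))))"

definition beta_obj ::
  "('k::field \<Rightarrow> 'm::ab_group_add \<Rightarrow> 'm) \<Rightarrow> (nat \<Rightarrow> 'm set) \<Rightarrow> (nat \<Rightarrow> (nat \<Rightarrow> nat) \<Rightarrow> 'm \<Rightarrow> 'm) \<Rightarrow>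
   ('k \<Rightarrow> 'a::ab_group_add \<Rightarrow> 'a) \<Rightarrow> ('m \<Rightarrow> nat list \<Rightarrow> 'a list \<Rightarrow> 'a) \<Rightarrow> bool"
  where "beta_obj sM M act sA \<beta> \<longleftrightarrow>
    vector_space sA \<and>
    \<comment> \<open>(beta1)\<close>
    (\<forall>r x as \<rho>. x \<in> Minv M act r \<longrightarrow> length as = length r \<longrightarrow> \<rho> permutes {0..<length r} \<longrightarrow>
       \<beta> x r as = \<beta> (act (sum_list r) (block_perm r \<rho>) x) (comp_perm \<rho> r) (comp_perm \<rho> as)) \<and>
    \<comment> \<open>(beta2)\<close>
    (\<forall>r x a0 as. x \<in> Minv M act (0 # r) \<longrightarrow> length as = length r \<longrightarrow>
       \<beta> x (0 # r) (a0 # as) = \<beta> x r as) \<and>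
    \<comment> \<open>(beta3)\<close>
    (\<forall>r1 r x c a1 as. x \<in> Minv M act (r1 # r) \<longrightarrow> length as = length r \<longrightarrow>
       \<beta> x (r1 # r) (sA c a1 # as) = sA (c ^ r1) (\<beta> x (r1 # r) (a1 # as))) \<and>
    \<comment> \<open>(beta4)\<close>
    (\<forall>r q x as. x \<in> Minv M act r \<longrightarrow> q \<in> Comp (length as) (length r) \<longrightarrow>
       \<beta> x r (rep_word q as) =
       \<beta> (coset_sum (Young (comp_merge q r)) (Young r) (\<lambda>\<sigma>. act (sum_list r) \<sigma> x))
         (comp_merge q r) as) \<and>
    \<comment> \<open>(beta5)\<close>
    (\<forall>r1 r x a0 a1 as. x \<in> Minv M act (r1 # r) \<longrightarrow> length as = length r \<longrightarrow>
       \<beta> x (r1 # r) ((a0 + a1) # as) =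
       (\<Sum>l\<in>{0..r1}. \<beta> x (l # (r1 - l) # r) (a0 # a1 # as))) \<and>
    \<comment> \<open>(beta6)\<close>
    (\<forall>r x y c as. x \<in> Minv M act r \<longrightarrow> y \<in> Minv M act r \<longrightarrow> length as = length r \<longrightarrow>
       \<beta> (sM c x + y) r as = sA c (\<beta> x r as) + \<beta> y r as)"

definition beta_mor ::
  "('k::field \<Rightarrow> 'm::ab_group_add \<Rightarrow> 'm) \<Rightarrow> (nat \<Rightarrow> 'm set) \<Rightarrow> (nat \<Rightarrow> (nat \<Rightarrow> nat) \<Rightarrow> 'm \<Rightarrow> 'm) \<Rightarrow>
   ('k \<Rightarrow> 'a::ab_group_add \<Rightarrow> 'a) \<Rightarrow> ('m \<Rightarrow> nat list \<Rightarrow> 'a list \<Rightarrow> 'a) \<Rightarrow>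
   ('k \<Rightarrow> 'b::ab_group_add \<Rightarrow> 'b) \<Rightarrow> ('m \<Rightarrow> nat list \<Rightarrow> 'b list \<Rightarrow> 'b) \<Rightarrow> ('a \<Rightarrow> 'b) \<Rightarrow> bool"
  where "beta_mor sM M act sA \<beta> sB \<beta>' g \<longleftrightarrow>
    Vector_Spaces.linear sA sB g \<and>
    (\<forall>r x as. x \<in> Minv M act r \<longrightarrow> length as = length r \<longrightarrow> g (\<beta> x r as) = \<beta>' x r (map g as))"

end

theory Submission
  imports Defs
begin


definition pgrp :: "(nat \<Rightarrow> nat) set \<Rightarrow> bool" where
  "pgrp G \<longleftrightarrow> finite G \<and> id \<in> G \<and> (\<forall>\<sigma>\<in>G. \<forall>\<tau>\<in>G. \<sigma> \<circ> \<tau> \<in> G) \<and> (\<forall>\<sigma>\<in>G. bij \<sigma> \<and> inv \<sigma> \<in> G)"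

definition lc :: "(nat \<Rightarrow> nat) \<Rightarrow> (nat \<Rightarrow> nat) set \<Rightarrow> (nat \<Rightarrow> nat) set" where
  "lc \<sigma> H = (\<lambda>\<tau>. \<sigma> \<circ> \<tau>) ` H"

definition cosets :: "(nat \<Rightarrow> nat) set \<Rightarrow> (nat \<Rightarrow> nat) set \<Rightarrow> (nat \<Rightarrow> nat) set set" where
  "cosets G H = {lc \<sigma> H | \<sigma>. \<sigma> \<in> G}"

definition rep :: "(nat \<Rightarrow> nat) set \<Rightarrow> nat \<Rightarrow> nat" where
  "rep C = (SOME \<sigma>. \<sigma> \<in> C)"

lemma coset_sum_alt: "coset_sum G H f = (\<Sum>C\<in>cosets G H. f (rep C))"
  unfolding coset_sum_def cosets_def lc_def rep_def by simp

definition rinv :: "(nat \<Rightarrow> nat) set \<Rightarrow> (nat \<Rightarrow> nat) set \<Rightarrow> ((nat \<Rightarrow> nat) \<Rightarrow> 'b) \<Rightarrow> bool" where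
  "rinv G H f \<longleftrightarrow> (\<forall>\<sigma>\<in>G. \<forall>\<tau>\<in>H. f (\<sigma> \<circ> \<tau>) = f \<sigma>)"

lemma pgrpD:
  assumes "pgrp G"
  shows "finite G" "id \<in> G" "\<And>\<sigma> \<tau>. \<sigma>\<in>G \<Longrightarrow> \<tau>\<in>G \<Longrightarrow> \<sigma> \<circ> \<tau> \<in> G"
    "\<And>\<sigma>. \<sigma>\<in>G \<Longrightarrow> bij \<sigma>" "\<And>\<sigma>. \<sigma>\<in>G \<Longrightarrow> inv \<sigma> \<in> G"
  using assms unfolding pgrp_def by auto

lemma inv_cancel1: "bij \<sigma> \<Longrightarrow> inv \<sigma> \<circ> \<sigma> = id"
  by (simp add: bij_is_inj)
lemma inv_cancel2: "bij \<sigma> \<Longrightarrow> \<sigma> \<circ> inv \<sigma> = id"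
  using bij_is_surj surj_iff by blast

lemma lc_self: "pgrp H \<Longrightarrow> \<sigma> \<in> lc \<sigma> H"
  unfolding lc_def using pgrpD(2)[of H] by (metis comp_id image_eqI)

lemma lc_lc: "lc \<sigma> (lc \<tau> H) = lc (\<sigma> \<circ> \<tau>) H"
  unfolding lc_def image_image by (simp add: comp_assoc)

lemma lc_mem: "\<tau> \<in> H \<Longrightarrow> \<sigma> \<circ> \<tau> \<in> lc \<sigma> H"
  unfolding lc_def by auto

lemma lc_eq:
  assumes H: "pgrp H" and "\<sigma>' \<in> lc \<sigma> H"
  shows "lc \<sigma>' H = lc \<sigma> H"
proof -
  obtain h where h: "h \<in> H" "\<sigma>' = \<sigma> \<circ> h" using assms(2) unfolding lc_def by auto
  have "lc h H = H"
  proof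
    show "lc h H \<subseteq> H" unfolding lc_def using pgrpD(3)[OF H] h by auto
    show "H \<subseteq> lc h H"
    proof
      fix t assume t: "t \<in> H"
      have "t = h \<circ> (inv h \<circ> t)" using inv_cancel2[OF pgrpD(4)[OF H h(1)]] by (metis comp_assoc id_comp)
      moreover have "inv h \<circ> t \<in> H" using pgrpD(3,5)[OF H] h t by auto
      ultimately show "t \<in> lc h H" unfolding lc_def by blast
    qed
  qed
  then show ?thesis using h by (metis lc_lc)
qed

lemma lc_eq_iff:
  assumes H: "pgrp H" and "bij \<sigma>"
  shows "lc \<sigma> H = lc \<sigma>' H \<longleftrightarrow> inv \<sigma> \<circ> \<sigma>' \<in> H"
proof
  assume "lc \<sigma> H = lc \<sigma>' H"
  then have "\<sigma>' \<in> lc \<sigma> H" using lc_self[OF H] by metis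
  then obtain h where "h \<in> H" "\<sigma>' = \<sigma> \<circ> h" unfolding lc_def by auto
  then show "inv \<sigma> \<circ> \<sigma>' \<in> H" using inv_cancel1[OF assms(2)] by (simp add: comp_assoc[symmetric])
next
  assume a: "inv \<sigma> \<circ> \<sigma>' \<in> H"
  have "\<sigma>' = \<sigma> \<circ> (inv \<sigma> \<circ> \<sigma>')" using inv_cancel2[OF assms(2)] by (metis comp_assoc id_comp)
  then have "\<sigma>' \<in> lc \<sigma> H" using lc_mem[OF a] by metis
  then show "lc \<sigma> H = lc \<sigma>' H" using lc_eq[OF H] by metis
qed

lemma cos_rep:
  assumes "pgrp H" "C \<in> cosets G H"
  shows "rep C \<in> C"
proof -
  obtain \<sigma> where "C = lc \<sigma> H" using assms(2) unfolding cosets_def by auto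
  then have "\<sigma> \<in> C" using lc_self[OF assms(1)] by auto
  then show ?thesis unfolding rep_def by (metis some_eq_imp)
qed

lemma cos_sub:
  assumes "pgrp G" "H \<subseteq> G" "C \<in> cosets G H"
  shows "C \<subseteq> G"
  using assms pgrpD(3)[OF assms(1)] unfolding cosets_def lc_def by auto

lemma cos_rep_lc:
  assumes "pgrp H" "C \<in> cosets G H"
  shows "C = lc (rep C) H"
proof -
  obtain \<sigma> where "C = lc \<sigma> H" using assms(2) unfolding cosets_def by auto
  then show ?thesis using lc_eq[OF assms(1)] cos_rep[OF assms] by metis
qed

lemma finite_cos: "pgrp G \<Longrightarrow> finite (cosets G H)"
  unfolding cosets_def using pgrpD(1) by (simp add: setcompr_eq_image)

lemma rinv_const:
  assumes "pgrp H" "rinv G H f" "C \<in> cosets G H" "\<sigma> \<in> C" "rep C \<in> G"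
  shows "f \<sigma> = f (rep C)"
proof -
  have "C = lc (rep C) H" using cos_rep_lc assms by auto
  then obtain h where "h \<in> H" "\<sigma> = rep C \<circ> h" using assms(4) unfolding lc_def by auto
  then show ?thesis using assms(2,5) unfolding rinv_def by auto
qed

lemma lc_in_cos: "\<sigma> \<in> G \<Longrightarrow> lc \<sigma> H \<in> cosets G H"
  unfolding cosets_def by auto


lemma rep_in_G: "pgrp G \<Longrightarrow> pgrp H \<Longrightarrow> H \<subseteq> G \<Longrightarrow> C \<in> cosets G H \<Longrightarrow> rep C \<in> G"
  using cos_rep cos_sub by blast


lemma coset_sum_choice:
  assumes G: "pgrp G" and H: "pgrp H" "H \<subseteq> G" and f: "rinv G H f"
    and ch: "\<And>C. C \<in> cosets G H \<Longrightarrow> ch C \<in> C"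
  shows "coset_sum G H f = (\<Sum>C\<in>cosets G H. f (ch C))"
  unfolding coset_sum_alt
proof (rule sum.cong[OF refl])
  fix C assume C: "C \<in> cosets G H"
  show "f (rep C) = f (ch C)"
    using rinv_const[OF H(1) f C ch[OF C] rep_in_G[OF G H C]] by simp
qed

lemma coset_sum_reindex:
  assumes G: "pgrp G" and H: "pgrp H" "H \<subseteq> G" and f: "rinv G H f"
    and bij: "bij_betw \<Phi> (cosets G H') (cosets G H)"
    and g: "\<And>C. C \<in> cosets G H' \<Longrightarrow> g (rep C) \<in> \<Phi> C"
  shows "coset_sum G H' (\<lambda>\<sigma>. f (g \<sigma>)) = coset_sum G H f"
proof -
  have "(\<Sum>C\<in>cosets G H'. f (rep (\<Phi> C))) = (\<Sum>C\<in>cosets G H. f (rep C))"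
    by (rule sum.reindex_bij_betw[OF bij])
  moreover have "(\<Sum>C\<in>cosets G H'. f (rep (\<Phi> C))) = (\<Sum>C\<in>cosets G H'. f (g (rep C)))"
  proof (rule sum.cong[OF refl])
    fix C assume C: "C \<in> cosets G H'"
    have PC: "\<Phi> C \<in> cosets G H" using bij_betw_apply[OF bij C] .
    show "f (rep (\<Phi> C)) = f (g (rep C))"
      using rinv_const[OF H(1) f PC g[OF C] rep_in_G[OF G H PC]] by (rule sym)
  qed
  ultimately show ?thesis unfolding coset_sum_alt by simp
qed

lemma lc_id: "lc id C = C" unfolding lc_def by simp

lemma cos_lc_closed:
  assumes G: "pgrp G" and C: "C \<in> cosets G H" and \<tau>: "\<tau> \<in> G"
  shows "lc \<tau> C \<in> cosets G H"
proof -
  obtain \<sigma> where s: "\<sigma> \<in> G" "C = lc \<sigma> H" using C unfolding cosets_def by auto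
  then have "lc \<tau> C = lc (\<tau> \<circ> \<sigma>) H" by (simp add: lc_lc)
  moreover have "\<tau> \<circ> \<sigma> \<in> G" using pgrpD(3)[OF G \<tau> s(1)] .
  ultimately show ?thesis using lc_in_cos by metis
qed

lemma coset_sum_lmult:
  assumes G: "pgrp G" and H: "pgrp H" "H \<subseteq> G" and f: "rinv G H f" and \<pi>: "\<pi> \<in> G"
  shows "coset_sum G H (\<lambda>\<sigma>. f (\<pi> \<circ> \<sigma>)) = coset_sum G H f"
proof (rule coset_sum_reindex[OF G H f])
  have ip: "inv \<pi> \<in> G" "bij \<pi>" using pgrpD(4,5)[OF G \<pi>] by auto
  show "bij_betw (lc \<pi>) (cosets G H) (cosets G H)"
  proof (rule bij_betw_byWitness[where f'="lc (inv \<pi>)"])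
    show "\<forall>a\<in>cosets G H. lc (inv \<pi>) (lc \<pi> a) = a" by (simp add: lc_lc inv_cancel1[OF ip(2)] lc_id)
    show "\<forall>a\<in>cosets G H. lc \<pi> (lc (inv \<pi>) a) = a" by (simp add: lc_lc inv_cancel2[OF ip(2)] lc_id)
    show "lc \<pi> ` cosets G H \<subseteq> cosets G H" using cos_lc_closed[OF G _ \<pi>] by auto
    show "lc (inv \<pi>) ` cosets G H \<subseteq> cosets G H" using cos_lc_closed[OF G _ ip(1)] by auto
  qed
  fix C assume "C \<in> cosets G H"
  then have "rep C \<in> C" using cos_rep[OF H(1)] by auto
  then show "\<pi> \<circ> rep C \<in> lc \<pi> C" unfolding lc_def by auto
qed

lemma comp_inv_mem:
  assumes "pgrp H" "a \<in> H" "b \<in> H" "c \<in> H"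
  shows "a \<circ> b \<circ> c \<in> H"
  using pgrpD(3)[OF assms(1)] assms(2-4) by metis

lemma coset_sum_tower:
  assumes G: "pgrp G" and H: "pgrp H" "H \<subseteq> G" and K: "pgrp K" "K \<subseteq> H" and f: "rinv G K f"
  shows "coset_sum G K f = coset_sum G H (\<lambda>\<sigma>. coset_sum H K (\<lambda>\<tau>. f (\<sigma> \<circ> \<tau>)))"
proof -
  have KG: "K \<subseteq> G" using H K by auto
  define \<Phi> where "\<Phi> = (\<lambda>p. lc (rep (fst p) \<circ> rep (snd p)) K)"
  have repE: "rep E \<in> G" "bij (rep E)" if "E \<in> cosets G H" for E
    using rep_in_G[OF G H that] pgrpD(4)[OF G] by auto
  have repD: "rep D \<in> H" "bij (rep D)" if "D \<in> cosets H K" for D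
    using rep_in_G[OF H(1) K that] pgrpD(4)[OF H(1)] by auto
  have bij: "bij_betw \<Phi> (cosets G H \<times> cosets H K) (cosets G K)"
  proof (rule bij_betwI')
    fix p p' assume p: "p \<in> cosets G H \<times> cosets H K" and p': "p' \<in> cosets G H \<times> cosets H K"
    obtain E D where ED: "p = (E, D)" "E \<in> cosets G H" "D \<in> cosets H K" using p by auto
    obtain E' D' where ED': "p' = (E', D')" "E' \<in> cosets G H" "D' \<in> cosets H K" using p' by auto
    note bs = repE[OF ED(2)] repD[OF ED(3)] repE[OF ED'(2)] repD[OF ED'(3)]
    define a where "a = rep E \<circ> rep D"
    define a' where "a' = rep E' \<circ> rep D'"
    have ba: "bij a" unfolding a_def using bs bij_comp by blast
    show "(\<Phi> p = \<Phi> p') = (p = p')"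
    proof
      assume "\<Phi> p = \<Phi> p'"
      then have "lc a K = lc a' K" using ED ED' \<Phi>_def a_def a'_def by simp
      then have k: "inv a \<circ> a' \<in> K"
        using lc_eq_iff[OF K(1) ba] by simp
      have eq1: "inv a \<circ> a' = inv (rep D) \<circ> (inv (rep E) \<circ> rep E') \<circ> rep D'"
        unfolding a_def a'_def using bs by (simp add: o_inv_distrib comp_assoc)
      have "rep D \<circ> (inv a \<circ> a') \<circ> inv (rep D') = (rep D \<circ> inv (rep D)) \<circ> (inv (rep E) \<circ> rep E') \<circ> (rep D' \<circ> inv (rep D'))"
        unfolding eq1 by (simp add: comp_assoc)
      also have "\<dots> = inv (rep E) \<circ> rep E'" using inv_cancel2[OF bs(4)] inv_cancel2[OF bs(8)] by simp
      finally have e: "rep D \<circ> (inv a \<circ> a') \<circ> inv (rep D') = inv (rep E) \<circ> rep E'" .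
      have "rep D \<circ> (inv a \<circ> a') \<circ> inv (rep D') \<in> H"
        apply (rule comp_inv_mem[OF H(1)])
        using bs k K(2) pgrpD(5)[OF H(1)] by auto
      then have "inv (rep E) \<circ> rep E' \<in> H" using e by simp
      then have "lc (rep E) H = lc (rep E') H" using lc_eq_iff[OF H(1) bs(2)] by simp
      then have EE: "E = E'" using cos_rep_lc[OF H(1)] ED ED' by metis
      have "inv a \<circ> a' = inv (rep D) \<circ> rep D'"
        unfolding eq1 EE using inv_cancel1[OF bs(6)] by simp
      then have "inv (rep D) \<circ> rep D' \<in> K" using k by simp
      then have "lc (rep D) K = lc (rep D') K" using lc_eq_iff[OF K(1) bs(4)] by simp
      then have "D = D'" using cos_rep_lc[OF K(1)] ED ED' by metis
      then show "p = p'" using EE ED ED' by simp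
    qed simp
  next
    fix p assume "p \<in> cosets G H \<times> cosets H K"
    then obtain E D where ED: "p = (E, D)" "E \<in> cosets G H" "D \<in> cosets H K" by auto
    have "rep E \<circ> rep D \<in> G" using pgrpD(3)[OF G repE(1)[OF ED(2)]] repD(1)[OF ED(3)] H(2) by auto
    then show "\<Phi> p \<in> cosets G K" unfolding \<Phi>_def using ED lc_in_cos by simp
  next
    fix C assume "C \<in> cosets G K"
    then obtain \<sigma> where \<sigma>: "\<sigma> \<in> G" "C = lc \<sigma> K" unfolding cosets_def by auto
    define E where "E = lc \<sigma> H"
    have E: "E \<in> cosets G H" using \<sigma> E_def lc_in_cos by auto
    have "lc (rep E) H = lc \<sigma> H" using cos_rep_lc[OF H(1) E] E_def by simp
    then have h: "inv (rep E) \<circ> \<sigma> \<in> H" using lc_eq_iff[OF H(1) repE(2)[OF E]] by simp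
    define D where "D = lc (inv (rep E) \<circ> \<sigma>) K"
    have D: "D \<in> cosets H K" using h D_def lc_in_cos by auto
    have "lc (rep D) K = D" using cos_rep_lc[OF K(1) D] by simp
    then have "\<Phi> (E, D) = lc (rep E) (lc (inv (rep E) \<circ> \<sigma>) K)" unfolding \<Phi>_def D_def
      by (simp add: lc_lc[symmetric])
    also have "\<dots> = lc ((rep E \<circ> inv (rep E)) \<circ> \<sigma>) K" by (simp add: lc_lc comp_assoc)
    also have "\<dots> = C" using inv_cancel2[OF repE(2)[OF E]] \<sigma>(2) by simp
    finally have "C = \<Phi> (E, D)" by simp
    moreover have "(E, D) \<in> cosets G H \<times> cosets H K" using E D by simp
    ultimately show "\<exists>p\<in>cosets G H \<times> cosets H K. C = \<Phi> p" by blast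
  qed
  have "coset_sum G K f = (\<Sum>p\<in>cosets G H \<times> cosets H K. f (rep (\<Phi> p)))"
    unfolding coset_sum_alt using sum.reindex_bij_betw[OF bij, of "\<lambda>C. f (rep C)"] by simp
  also have "\<dots> = (\<Sum>p\<in>cosets G H \<times> cosets H K. f (rep (fst p) \<circ> rep (snd p)))"
  proof (rule sum.cong[OF refl])
    fix p assume p: "p \<in> cosets G H \<times> cosets H K"
    have PC: "\<Phi> p \<in> cosets G K" using bij_betw_apply[OF bij p] .
    have m: "rep (fst p) \<circ> rep (snd p) \<in> \<Phi> p" unfolding \<Phi>_def using lc_self[OF K(1)] by simp
    show "f (rep (\<Phi> p)) = f (rep (fst p) \<circ> rep (snd p))"
      using rinv_const[OF K(1) f PC m rep_in_G[OF G K(1) KG PC]] by simp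
  qed
  also have "\<dots> = coset_sum G H (\<lambda>\<sigma>. coset_sum H K (\<lambda>\<tau>. f (\<sigma> \<circ> \<tau>)))"
    unfolding coset_sum_alt by (simp add: sum.cartesian_product case_prod_beta)
  finally show ?thesis .
qed


definition fsupp :: "('g \<Rightarrow> 'k::zero) \<Rightarrow> 'g set" where "fsupp v = {g. v g \<noteq> 0}"

lemma fscale_apply: "fscale c v g = c * v g" by (simp add: fscale_def)

lemma module_fscale: "module (fscale :: 'k::field \<Rightarrow> ('g \<Rightarrow> 'k) \<Rightarrow> _)"
  by unfold_locales (auto simp: fscale_def algebra_simps fun_eq_iff)

lemma free_gen_apply: "free_gen g h = (if h = g then 1 else 0)" by (simp add: free_gen_def)

lemma fsupp_free_gen[simp]: "fsupp (free_gen g :: _ \<Rightarrow> 'k::field) = {g}"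
  by (auto simp: fsupp_def free_gen_def)

lemma fsupp_add: "fsupp ((v::_\<Rightarrow>'k::field) + w) \<subseteq> fsupp v \<union> fsupp w" by (auto simp: fsupp_def)
lemma fsupp_diff: "fsupp ((v::_\<Rightarrow>'k::field) - w) \<subseteq> fsupp v \<union> fsupp w" by (auto simp: fsupp_def)
lemma fsupp_scale: "fsupp (fscale c (v::_ \<Rightarrow> 'k::field)) \<subseteq> fsupp v" by (auto simp: fsupp_def fscale_def)
lemma fsupp_zero[simp]: "fsupp 0 = {}" by (auto simp: fsupp_def)

lemma fin_add: "finite (fsupp (v::_\<Rightarrow>'k::field)) \<Longrightarrow> finite (fsupp w) \<Longrightarrow> finite (fsupp (v + w))"
  using fsupp_add finite_subset by (metis finite_Un)
lemma fin_diff: "finite (fsupp (v::_\<Rightarrow>'k::field)) \<Longrightarrow> finite (fsupp w) \<Longrightarrow> finite (fsupp (v - w))"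
  using fsupp_diff finite_subset by (metis finite_Un)
lemma fin_scale: "finite (fsupp (v::_ \<Rightarrow> 'k::field)) \<Longrightarrow> finite (fsupp (fscale c v))"
  using fsupp_scale finite_subset by metis
lemma fin_sum: "finite I \<Longrightarrow> (\<And>i. i \<in> I \<Longrightarrow> finite (fsupp (f i :: _ \<Rightarrow> 'k::field))) \<Longrightarrow> finite (fsupp (\<Sum>i\<in>I. f i))"
  by (induction I rule: finite_induct) (auto intro: fin_add)
lemma fin_free_gen[simp]: "finite (fsupp (free_gen g :: _ \<Rightarrow> 'k::field))" by simp

lemma push_alt:
  assumes "finite T" "fsupp v \<subseteq> T"
  shows "push \<phi> v h = (\<Sum>g\<in>{g\<in>T. \<phi> g = h}. v g)"
  unfolding push_def
  by (rule sum.mono_neutral_left) (use assms in \<open>auto simp: fsupp_def\<close>)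

lemma push_free_gen: "push \<phi> (free_gen g :: _ \<Rightarrow> 'k::field) = free_gen (\<phi> g)"
proof
  fix h
  have "push \<phi> (free_gen g :: _ \<Rightarrow> 'k) h = (\<Sum>g'\<in>{g'\<in>{g}. \<phi> g' = h}. free_gen g g')"
    by (rule push_alt) auto
  also have "\<dots> = free_gen (\<phi> g) h"
  proof (cases "\<phi> g = h")
    case True
    then have "{g'\<in>{g}. \<phi> g' = h} = {g}" by auto
    then show ?thesis using True by (simp add: free_gen_def)
  next
    case False
    have e: "{g'\<in>{g}. \<phi> g' = h} = {}" using False by auto
    show ?thesis unfolding e using False by (simp add: free_gen_def)
  qed
  finally show "push \<phi> (free_gen g :: _ \<Rightarrow> 'k) h = free_gen (\<phi> g) h" .
qed

lemma push_add:
  assumes "finite (fsupp v)" "finite (fsupp w)"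
  shows "push \<phi> (v + w) = push \<phi> v + push \<phi> (w :: _ \<Rightarrow> 'k::field)"
proof
  fix h
  define T where "T = fsupp v \<union> fsupp w"
  have T: "finite T" "fsupp v \<subseteq> T" "fsupp w \<subseteq> T" "fsupp (v + w) \<subseteq> T"
    using assms fsupp_add[of v w] unfolding T_def by auto
  have "push \<phi> (v + w) h = (\<Sum>g\<in>{g\<in>T. \<phi> g = h}. (v + w) g)" by (rule push_alt[OF T(1,4)])
  also have "\<dots> = (\<Sum>g\<in>{g\<in>T. \<phi> g = h}. v g) + (\<Sum>g\<in>{g\<in>T. \<phi> g = h}. w g)"
    by (simp add: sum.distrib)
  also have "\<dots> = push \<phi> v h + push \<phi> w h"
    by (simp only: push_alt[OF T(1,2)] push_alt[OF T(1,3)])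
  finally show "push \<phi> (v + w) h = (push \<phi> v + push \<phi> w) h" by simp
qed

lemma push_diff:
  assumes "finite (fsupp v)" "finite (fsupp w)"
  shows "push \<phi> (v - w) = push \<phi> v - push \<phi> (w :: _ \<Rightarrow> 'k::field)"
proof
  fix h
  define T where "T = fsupp v \<union> fsupp w"
  have T: "finite T" "fsupp v \<subseteq> T" "fsupp w \<subseteq> T" "fsupp (v - w) \<subseteq> T"
    using assms fsupp_diff[of v w] unfolding T_def by auto
  have "push \<phi> (v - w) h = (\<Sum>g\<in>{g\<in>T. \<phi> g = h}. (v - w) g)" by (rule push_alt[OF T(1,4)])
  also have "\<dots> = (\<Sum>g\<in>{g\<in>T. \<phi> g = h}. v g) - (\<Sum>g\<in>{g\<in>T. \<phi> g = h}. w g)"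
    by (simp add: sum_subtractf)
  also have "\<dots> = push \<phi> v h - push \<phi> w h"
    by (simp only: push_alt[OF T(1,2)] push_alt[OF T(1,3)])
  finally show "push \<phi> (v - w) h = (push \<phi> v - push \<phi> w) h" by simp
qed

lemma push_scale: "push \<phi> (fscale c v) = fscale c (push \<phi> (v :: _ \<Rightarrow> 'k::field))"
proof (cases "c = 0")
  case True then show ?thesis by (simp add: push_def fscale_def fun_eq_iff)
next
  case False then show ?thesis
    by (simp add: push_def fscale_def fun_eq_iff sum_distrib_left)
qed

lemma push_zero[simp]: "push \<phi> (0 :: _ \<Rightarrow> 'k::field) = 0"
  by (simp add: push_def fun_eq_iff)

lemma push_sum:
  assumes "finite I" "\<And>i. i \<in> I \<Longrightarrow> finite (fsupp (f i))"
  shows "push \<phi> (\<Sum>i\<in>I. f i) = (\<Sum>i\<in>I. push \<phi> (f i :: _ \<Rightarrow> 'k::field))"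
  using assms
proof (induction I rule: finite_induct)
  case (insert i I)
  have "push \<phi> (sum f (insert i I)) = push \<phi> (f i + sum f I)" using insert(1,2) by simp
  also have "\<dots> = push \<phi> (f i) + push \<phi> (sum f I)"
    by (rule push_add) (use insert fin_sum[of I f] in auto)
  also have "\<dots> = (\<Sum>i\<in>insert i I. push \<phi> (f i))" using insert by simp
  finally show ?case .
qed simp

lemma push_id_on:
  assumes "\<And>g. g \<in> fsupp v \<Longrightarrow> \<phi> g = g"
  shows "push \<phi> v = (v :: _ \<Rightarrow> 'k::field)"
proof
  fix h
  have "{g. v g \<noteq> 0 \<and> \<phi> g = h} = (if v h \<noteq> 0 then {h} else {})"
    using assms unfolding fsupp_def by auto
  then show "push \<phi> v h = v h" unfolding push_def by auto
qed

lemma fsupp_push: "fsupp (push \<phi> v) \<subseteq> \<phi> ` fsupp (v :: _ \<Rightarrow> 'k::field)"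
proof
  fix h assume h: "h \<in> fsupp (push \<phi> v)"
  show "h \<in> \<phi> ` fsupp v"
  proof (rule ccontr)
    assume "h \<notin> \<phi> ` fsupp v"
    then have e: "{g. v g \<noteq> 0 \<and> \<phi> g = h} = {}" unfolding fsupp_def by auto
    have "push \<phi> v h = 0" unfolding push_def e by simp
    then show False using h unfolding fsupp_def by simp
  qed
qed

lemma fin_push: "finite (fsupp v) \<Longrightarrow> finite (fsupp (push \<phi> (v :: _ \<Rightarrow> 'k::field)))"
  using fsupp_push[of \<phi> v] finite_surj by auto

lemma push_comp: "finite (fsupp v) \<Longrightarrow> push \<phi> (push \<psi> v) = push (\<phi> \<circ> \<psi>) (v :: _ \<Rightarrow> 'k::field)"
proof
  fix h assume a: "finite (fsupp v)"
  have "push \<phi> (push \<psi> v) h = (\<Sum>g'\<in>{g'\<in>\<psi> ` fsupp v. \<phi> g' = h}. push \<psi> v g')"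
    by (rule push_alt) (use a fsupp_push[of \<psi> v] in auto)
  also have "\<dots> = (\<Sum>g'\<in>{g'\<in>\<psi> ` fsupp v. \<phi> g' = h}. \<Sum>g\<in>{g\<in>fsupp v. \<psi> g = g'}. v g)"
    by (rule sum.cong[OF refl]) (rule push_alt[OF a], simp)
  also have "\<dots> = (\<Sum>g'\<in>{g'\<in>\<psi> ` fsupp v. \<phi> g' = h}. \<Sum>g\<in>{x\<in>{g\<in>fsupp v. \<phi> (\<psi> g) = h}. \<psi> x = g'}. v g)"
  proof (rule sum.cong[OF refl])
    fix g' assume "g' \<in> {g'\<in>\<psi> ` fsupp v. \<phi> g' = h}"
    then have "{g\<in>fsupp v. \<psi> g = g'} = {x\<in>{g\<in>fsupp v. \<phi> (\<psi> g) = h}. \<psi> x = g'}" by auto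
    then show "(\<Sum>g\<in>{g\<in>fsupp v. \<psi> g = g'}. v g) = (\<Sum>g\<in>{x\<in>{g\<in>fsupp v. \<phi> (\<psi> g) = h}. \<psi> x = g'}. v g)" by simp
  qed
  also have "\<dots> = (\<Sum>g\<in>{g\<in>fsupp v. \<phi> (\<psi> g) = h}. v g)"
    by (rule sum.group) (use a in auto)
  also have "\<dots> = push (\<phi> \<circ> \<psi>) v h" using push_alt[OF a subset_refl, of "\<phi> \<circ> \<psi>" h] by simp
  finally show "push \<phi> (push \<psi> v) h = push (\<phi> \<circ> \<psi>) v h" .
qed


lemma perm_inv: "(\<sigma>::nat\<Rightarrow>nat) permutes {0..<n} \<Longrightarrow> inv \<sigma> permutes {0..<n}"
  by (rule permutes_inv)

lemma permute_list_nth': "\<sigma> permutes {0..<length xs} \<Longrightarrow> i < length xs \<Longrightarrow> permute_list \<sigma> xs ! i = xs ! \<sigma> i"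
  by (simp add: permute_list_def)

lemma perm_lt: assumes "(\<sigma>::nat\<Rightarrow>nat) permutes {0..<n}" "i < n" shows "\<sigma> i < n"
proof -
  have "i \<in> {0..<n}" using assms(2) by simp
  then have "\<sigma> i \<in> {0..<n}" using permutes_in_image[OF assms(1)] by blast
  then show ?thesis by simp
qed

lemma permute_list_update:
  assumes \<sigma>: "\<sigma> permutes {0..<length as}" and i: "i < length as"
  shows "permute_list (inv \<sigma>) (as[i := v]) = (permute_list (inv \<sigma>) as)[\<sigma> i := v]"
proof (rule nth_equalityI)
  show "length (permute_list (inv \<sigma>) (as[i := v])) = length ((permute_list (inv \<sigma>) as)[\<sigma> i := v])" by simp
  fix k assume k: "k < length (permute_list (inv \<sigma>) (as[i := v]))"
  then have k': "k < length as" by simp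
  have ik: "inv \<sigma> k < length as" using perm_lt[OF perm_inv[OF \<sigma>] k'] .
  have "inv \<sigma> k = i \<longleftrightarrow> k = \<sigma> i" using \<sigma> by (metis permutes_inverses(1) permutes_inverses(2))
  then show "permute_list (inv \<sigma>) (as[i := v]) ! k = (permute_list (inv \<sigma>) as)[\<sigma> i := v] ! k"
    using k' ik unfolding permute_list_def by (auto simp: nth_list_update)
qed

lemma permute_list_inv_at:
  assumes \<sigma>: "\<sigma> permutes {0..<length as}" and i: "i < length as"
  shows "permute_list (inv \<sigma>) as ! (\<sigma> i) = as ! i"
  using perm_lt[OF \<sigma> i] \<sigma> unfolding permute_list_def by (simp add: permutes_inverses(2))

locale SM =
  fixes sM :: "'k::field \<Rightarrow> 'm::ab_group_add \<Rightarrow> 'm" and M :: "nat \<Rightarrow> 'm set"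
    and act :: "nat \<Rightarrow> (nat \<Rightarrow> nat) \<Rightarrow> 'm \<Rightarrow> 'm"
  assumes sm: "sigma_module sM M act"
begin

lemma vsM: "vector_space sM" using sm unfolding sigma_module_def by auto

lemma M_sub: "module.subspace sM (M n)" using sm unfolding sigma_module_def by auto

lemma M_zero: "0 \<in> M n" using M_sub vsM by (simp add: module.subspace_def module_iff_vector_space)
lemma M_add: "x \<in> M n \<Longrightarrow> y \<in> M n \<Longrightarrow> x + y \<in> M n"
  using M_sub vsM by (simp add: module.subspace_def module_iff_vector_space)
lemma M_scale: "x \<in> M n \<Longrightarrow> sM c x \<in> M n"
  using M_sub vsM by (simp add: module.subspace_def module_iff_vector_space)
lemma M_sum: "finite I \<Longrightarrow> (\<And>i. i \<in> I \<Longrightarrow> f i \<in> M n) \<Longrightarrow> (\<Sum>i\<in>I. f i) \<in> M n"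
  by (induction I rule: finite_induct) (auto intro: M_zero M_add)

lemma sm_act: "\<sigma> permutes {0..<n} \<Longrightarrow> (\<forall>x\<in>M n. act n \<sigma> x \<in> M n) \<and>
        (\<forall>x\<in>M n. \<forall>y\<in>M n. act n \<sigma> (x + y) = act n \<sigma> x + act n \<sigma> y) \<and>
        (\<forall>x\<in>M n. \<forall>c. act n \<sigma> (sM c x) = sM c (act n \<sigma> x))"
  using sm unfolding sigma_module_def by simp
lemma act_M: "\<sigma> permutes {0..<n} \<Longrightarrow> x \<in> M n \<Longrightarrow> act n \<sigma> x \<in> M n"
  using sm_act by simp
lemma act_add: "\<sigma> permutes {0..<n} \<Longrightarrow> x \<in> M n \<Longrightarrow> y \<in> M n \<Longrightarrow> act n \<sigma> (x + y) = act n \<sigma> x + act n \<sigma> y"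
  using sm_act by simp
lemma act_scale: "\<sigma> permutes {0..<n} \<Longrightarrow> x \<in> M n \<Longrightarrow> act n \<sigma> (sM c x) = sM c (act n \<sigma> x)"
  using sm_act by simp
lemma act_id: "x \<in> M n \<Longrightarrow> act n id x = x"
  using sm unfolding sigma_module_def by simp
lemma act_comp: "\<sigma> permutes {0..<n} \<Longrightarrow> \<tau> permutes {0..<n} \<Longrightarrow> x \<in> M n \<Longrightarrow> act n (\<sigma> \<circ> \<tau>) x = act n \<sigma> (act n \<tau> x)"
  using sm unfolding sigma_module_def by simp
lemma act_zero: "\<sigma> permutes {0..<n} \<Longrightarrow> act n \<sigma> 0 = 0"
  using act_add[of \<sigma> n 0 0] M_zero by simp
lemma act_sum: assumes "\<sigma> permutes {0..<n}" "finite I" "\<And>i. i \<in> I \<Longrightarrow> f i \<in> M n"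
  shows "act n \<sigma> (\<Sum>i\<in>I. f i) = (\<Sum>i\<in>I. act n \<sigma> (f i))"
  using assms(2,3) proof (induction I rule: finite_induct)
  case (insert i I)
  then show ?case using act_add[OF assms(1), of "f i" "\<Sum>i\<in>I. f i"] M_sum[of I f n] by simp
qed (simp add: act_zero[OF assms(1)])

end

locale GA = SM sM M act
  for sM :: "'k::field \<Rightarrow> 'm::ab_group_add \<Rightarrow> 'm" and M :: "nat \<Rightarrow> 'm set"
    and act :: "nat \<Rightarrow> (nat \<Rightarrow> nat) \<Rightarrow> 'm \<Rightarrow> 'm" +
  fixes sA :: "'k \<Rightarrow> 'a::ab_group_add \<Rightarrow> 'a"
  assumes vsA: "vector_space sA"
begin

abbreviation "R \<equiv> Rel sM M sA"
abbreviation "RG \<equiv> Rel_gens sM M sA"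

interpretation fm: module "fscale :: 'k \<Rightarrow> ('m \<times> 'a list \<Rightarrow> 'k) \<Rightarrow> _" by (rule module_fscale)

lemma R_zero: "0 \<in> R" unfolding Rel_def by (rule fm.span_zero)
lemma R_add: "v \<in> R \<Longrightarrow> w \<in> R \<Longrightarrow> v + w \<in> R" unfolding Rel_def by (rule fm.span_add)
lemma R_diff: "v \<in> R \<Longrightarrow> w \<in> R \<Longrightarrow> v - w \<in> R" unfolding Rel_def by (rule fm.span_diff)
lemma R_neg: "v \<in> R \<Longrightarrow> - v \<in> R" unfolding Rel_def by (rule fm.span_neg)
lemma R_scale: "v \<in> R \<Longrightarrow> fscale c v \<in> R" unfolding Rel_def by (rule fm.span_scale)
lemma R_sum: "(\<And>i. i \<in> I \<Longrightarrow> f i \<in> R) \<Longrightarrow> (\<Sum>i\<in>I. f i) \<in> R" unfolding Rel_def by (rule fm.span_sum)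
lemma R_gen: "v \<in> RG \<Longrightarrow> v \<in> R" unfolding Rel_def by (rule fm.span_base)

lemma R_gen1: "x \<in> M (length as) \<Longrightarrow> y \<in> M (length as) \<Longrightarrow>
   free_gen (x + y, as) - free_gen (x, as) - free_gen (y, as) \<in> R"
  apply (rule R_gen) unfolding Rel_gens_def apply (rule UnI1, rule UnI1, rule UnI1) by auto
lemma R_gen2: "x \<in> M (length as) \<Longrightarrow> free_gen (sM c x, as) - fscale c (free_gen (x, as)) \<in> R"
  apply (rule R_gen) unfolding Rel_gens_def apply (rule UnI1, rule UnI1, rule UnI2) by auto
lemma R_gen3: "x \<in> M (length as) \<Longrightarrow> i < length as \<Longrightarrow>
   free_gen (x, as[i := a + b]) - free_gen (x, as[i := a]) - free_gen (x, as[i := b]) \<in> R"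
  apply (rule R_gen) unfolding Rel_gens_def apply (rule UnI1, rule UnI2) apply (simp only: mem_Collect_eq)
  apply (rule exI[of _ x], rule exI[of _ as], rule exI[of _ i]) by auto
lemma R_gen4: "x \<in> M (length as) \<Longrightarrow> i < length as \<Longrightarrow>
   free_gen (x, as[i := sA c (as ! i)]) - fscale c (free_gen (x, as)) \<in> R"
  apply (rule R_gen) unfolding Rel_gens_def apply (rule UnI2) by auto

lemma Free_sub: "fm.subspace (Free M)"
proof (rule fm.subspaceI)
  show "0 \<in> Free M" unfolding Free_def by (simp add: fsupp_def[symmetric])
  fix v w :: "'m \<times> 'a list \<Rightarrow> 'k" assume "v \<in> Free M" "w \<in> Free M"
  then show "v + w \<in> Free M" unfolding Free_def using fin_add[of v w]
    apply (auto simp: fsupp_def)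
    by (metis add.left_neutral)
next
  fix c and v :: "'m \<times> 'a list \<Rightarrow> 'k" assume "v \<in> Free M"
  then show "fscale c v \<in> Free M" unfolding Free_def using fin_scale[of v c]
    by (auto simp: fsupp_def fscale_def)
qed

lemma Free_fin: "v \<in> Free M \<Longrightarrow> finite (fsupp v)" unfolding Free_def fsupp_def by simp

lemma free_gen_Free: "fst g \<in> M (length (snd g)) \<Longrightarrow> free_gen g \<in> Free M"
  unfolding Free_def free_gen_def by auto

lemma RG_Free: "RG \<subseteq> Free M"
proof
  fix v assume "v \<in> RG"
  then show "v \<in> Free M" unfolding Rel_gens_def
    by (auto intro!: fm.subspace_diff[OF Free_sub] fm.subspace_scale[OF Free_sub] free_gen_Free
          M_add M_scale)
qed

lemma R_Free: "R \<subseteq> Free M"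
  unfolding Rel_def by (rule fm.span_minimal[OF RG_Free Free_sub])

lemma R_fin: "v \<in> R \<Longrightarrow> finite (fsupp v)" using R_Free Free_fin by blast


lemma gen_act_other: "length (snd g) \<noteq> n \<Longrightarrow> gen_act act n \<sigma> g = g"
  unfolding gen_act_def by simp
lemma gen_act_n: "length as = n \<Longrightarrow> gen_act act n \<sigma> (x, as) = (act n \<sigma> x, permute_list (inv \<sigma>) as)"
  unfolding gen_act_def by simp

lemma P_RG:
  assumes \<sigma>: "\<sigma> permutes {0..<n}" and v: "v \<in> RG"
  shows "push (gen_act act n \<sigma>) v \<in> R"
proof -
  let ?g = "gen_act act n \<sigma>"
  have pd: "push ?g (free_gen a - free_gen b - free_gen c) = free_gen (?g a) - free_gen (?g b) - free_gen (?g c)" for a b c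
    by (simp add: push_diff fin_diff push_free_gen)
  have ps: "push ?g (free_gen a - fscale c (free_gen b)) = free_gen (?g a) - fscale c (free_gen (?g b))" for a b c
    by (simp add: push_diff fin_scale push_scale push_free_gen)
  have pl: "\<sigma> permutes {0..<length (permute_list (inv \<sigma>) as)}" if "length as = n" for as :: "'a list"
    using that \<sigma> by simp
  from v show ?thesis unfolding Rel_gens_def
  proof (elim UnE CollectE exE conjE)
    fix x y as assume v: "v = free_gen (x + y, as) - free_gen (x, as) - free_gen (y, as)"
      and x: "x \<in> M (length as)" and y: "y \<in> M (length as)"
    show ?thesis
    proof (cases "length as = n")
      case True
      have xn: "x \<in> M n" "y \<in> M n" using x y True by auto
      then show ?thesis unfolding v pd using R_gen1[of "act n \<sigma> x" "permute_list (inv \<sigma>) as" "act n \<sigma> y"] True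
        by (simp add: gen_act_n act_add[OF \<sigma>] act_M[OF \<sigma>])
    next
      case False
      then show ?thesis unfolding v pd using R_gen1[OF x y] by (simp add: gen_act_other)
    qed
  next
    fix c x as assume v: "v = free_gen (sM c x, as) - fscale c (free_gen (x, as))"
      and x: "x \<in> M (length as)"
    show ?thesis
    proof (cases "length as = n")
      case True
      have xn: "x \<in> M n" using x True by auto
      then show ?thesis unfolding v ps using R_gen2[of "act n \<sigma> x" "permute_list (inv \<sigma>) as" c] True
        by (simp add: gen_act_n act_scale[OF \<sigma>] act_M[OF \<sigma>])
    next
      case False
      then show ?thesis unfolding v ps using R_gen2[OF x] by (simp add: gen_act_other)
    qed
  next
    fix x as i a b assume v: "v = free_gen (x, as[i := a + b]) - free_gen (x, as[i := a]) - free_gen (x, as[i := b])"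
      and x: "x \<in> M (length as)" and i: "i < length as"
    show ?thesis
    proof (cases "length as = n")
      case True
      have "\<sigma> i < length as" using perm_lt[OF \<sigma>] i True by simp
      then show ?thesis unfolding v pd
        using R_gen3[of "act n \<sigma> x" "permute_list (inv \<sigma>) as" "\<sigma> i" a b] True \<sigma> x i
        by (simp add: gen_act_n act_M permute_list_update)
    next
      case False
      then show ?thesis unfolding v pd using R_gen3[OF x i] by (simp add: gen_act_other)
    qed
  next
    fix x as i c assume v: "v = free_gen (x, as[i := sA c (as ! i)]) - fscale c (free_gen (x, as))"
      and x: "x \<in> M (length as)" and i: "i < length as"
    show ?thesis
    proof (cases "length as = n")
      case True
      have "\<sigma> i < length as" using perm_lt[OF \<sigma>] i True by simp
      then show ?thesis unfolding v ps
        using R_gen4[of "act n \<sigma> x" "permute_list (inv \<sigma>) as" "\<sigma> i" c] True \<sigma> x i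
        by (simp add: gen_act_n act_M permute_list_update permute_list_inv_at)
    next
      case False
      then show ?thesis unfolding v ps using R_gen4[OF x i] by (simp add: gen_act_other)
    qed
  qed
qed

lemma RG_fin: "v \<in> RG \<Longrightarrow> finite (fsupp v)" using RG_Free Free_fin by blast

lemma P_R:
  assumes \<sigma>: "\<sigma> permutes {0..<n}" and v: "v \<in> R"
  shows "push (gen_act act n \<sigma>) v \<in> R"
proof -
  have "finite (fsupp v) \<and> push (gen_act act n \<sigma>) v \<in> R"
    using v unfolding Rel_def
  proof (induction rule: fm.span_induct_alt)
    case base
    show ?case using R_zero unfolding Rel_def by (simp only: push_zero fsupp_zero finite.emptyI simp_thms)
  next
    case (step c x y)
    have fx: "finite (fsupp x)" using RG_fin step(1) by blast
    have "push (gen_act act n \<sigma>) (fscale c x + y) = push (gen_act act n \<sigma>) (fscale c x) + push (gen_act act n \<sigma>) y"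
      by (rule push_add[OF fin_scale[OF fx] conjunct1[OF step(2)]])
    also have "\<dots> = fscale c (push (gen_act act n \<sigma>) x) + push (gen_act act n \<sigma>) y"
      by (simp only: push_scale)
    finally have eq: "push (gen_act act n \<sigma>) (fscale c x + y) = fscale c (push (gen_act act n \<sigma>) x) + push (gen_act act n \<sigma>) y" .
    have f2: "finite (fsupp (fscale c x + y))" using fin_add[OF fin_scale[OF fx] conjunct1[OF step(2)]] .
    have "fscale c (push (gen_act act n \<sigma>) x) + push (gen_act act n \<sigma>) y \<in> R"
      using R_add[OF R_scale[OF P_RG[OF \<sigma> step(1)]]] step(2) unfolding Rel_def by blast
    then have "push (gen_act act n \<sigma>) (fscale c x + y) \<in> R" unfolding eq .
    then show ?case using f2 unfolding Rel_def by (rule conjI[rotated])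
  qed
  then show ?thesis by simp
qed

definition "Iv \<equiv> Inv sM M act sA"

lemma Iv_iff: "v \<in> Iv \<longleftrightarrow> v \<in> Free M \<and> (\<forall>n \<sigma>. \<sigma> permutes {0..<n} \<longrightarrow> push (gen_act act n \<sigma>) v - v \<in> R)"
  unfolding Iv_def Inv_def by simp

lemma Iv_fin: "v \<in> Iv \<Longrightarrow> finite (fsupp v)" using Iv_iff Free_fin by blast

lemma Iv_add: assumes "v \<in> Iv" "w \<in> Iv" shows "v + w \<in> Iv"
proof -
  have fv: "finite (fsupp v)" "finite (fsupp w)" using assms Iv_fin by auto
  show ?thesis unfolding Iv_iff
  proof (intro conjI allI impI)
    show "v + w \<in> Free M" using fm.subspace_add[OF Free_sub] assms Iv_iff by blast
    fix n and \<sigma> :: "nat \<Rightarrow> nat" assume \<sigma>: "\<sigma> permutes {0..<n}"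
    have "push (gen_act act n \<sigma>) (v + w) - (v + w) =
       (push (gen_act act n \<sigma>) v - v) + (push (gen_act act n \<sigma>) w - w)"
      using push_add[OF fv] by simp
    then show "push (gen_act act n \<sigma>) (v + w) - (v + w) \<in> R" using assms \<sigma> R_add unfolding Iv_iff by metis
  qed
qed

lemma Iv_scale: assumes "v \<in> Iv" shows "fscale c v \<in> Iv"
proof -
  show ?thesis unfolding Iv_iff
  proof (intro conjI allI impI)
    show "fscale c v \<in> Free M" using fm.subspace_scale[OF Free_sub] assms Iv_iff by blast
    fix n and \<sigma> :: "nat \<Rightarrow> nat" assume \<sigma>: "\<sigma> permutes {0..<n}"
    have "push (gen_act act n \<sigma>) (fscale c v) = fscale c (push (gen_act act n \<sigma>) v)" by (rule push_scale)
    then have "push (gen_act act n \<sigma>) (fscale c v) - fscale c v = fscale c (push (gen_act act n \<sigma>) v - v)"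
      by (simp add: fscale_def fun_eq_iff algebra_simps)
    then show "push (gen_act act n \<sigma>) (fscale c v) - fscale c v \<in> R" using assms \<sigma> R_scale unfolding Iv_iff by metis
  qed
qed

lemma Iv_neg: "v \<in> Iv \<Longrightarrow> - v \<in> Iv"
proof -
  assume "v \<in> Iv"
  moreover have "fscale (-1) v = - v" by (simp add: fscale_def fun_eq_iff)
  ultimately show ?thesis using Iv_scale[of v "-1"] by simp
qed

lemma Iv_diff: "v \<in> Iv \<Longrightarrow> w \<in> Iv \<Longrightarrow> v - w \<in> Iv"
  using Iv_add[OF _ Iv_neg] by (metis diff_conv_add_uminus)


lemma R_Iv: assumes "v \<in> R" shows "v \<in> Iv"
  unfolding Iv_iff
proof (intro conjI allI impI)
  show "v \<in> Free M" using R_Free assms by blast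
  fix n and \<sigma> :: "nat \<Rightarrow> nat" assume \<sigma>: "\<sigma> permutes {0..<n}"
  show "push (gen_act act n \<sigma>) v - v \<in> R" using R_diff[OF P_R[OF \<sigma> assms] assms] .
qed

lemma Iv_zero: "0 \<in> Iv" using R_Iv R_zero by blast

end


abbreviation st :: "nat list \<Rightarrow> nat \<Rightarrow> nat" where "st r i \<equiv> sum_list (take i r)"

lemma st_0[simp]: "st r 0 = 0" by simp
lemma st_Cons_Suc: "st (a # r) (Suc i) = a + st r i" by simp
lemma st_Suc: "i < length r \<Longrightarrow> st r (Suc i) = st r i + r ! i"
  by (simp add: take_Suc_conv_app_nth)
lemma st_Suc_ge: "st r i \<le> st r (Suc i)"
  by (cases "i < length r") (simp_all add: st_Suc)
lemma st_mono: "i \<le> j \<Longrightarrow> st r i \<le> st r j"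
  by (induction j rule: dec_induct) (auto intro: le_trans st_Suc_ge)
lemma st_le_sum: "st r i \<le> sum_list r"
proof -
  have "sum_list r = st r i + sum_list (drop i r)"
    by (metis append_take_drop_id sum_list_append)
  then show ?thesis by simp
qed
lemma st_len: "length r \<le> i \<Longrightarrow> st r i = sum_list r" by simp

lemma blk_Cons_0: "blk (a # r) 0 = {0..<a}" unfolding blk_def by simp
lemma blk_Cons_Suc: "blk (a # r) (Suc i) = {a + st r i ..< a + st r (Suc i)}"
  unfolding blk_def by simp
lemma blk_Cons_Suc': "blk (a # r) (Suc i) = (\<lambda>j. a + j) ` blk r i"
  unfolding blk_Cons_Suc blk_def by (simp add: image_add_atLeastLessThan add.commute)

lemma blk_sub: "blk r i \<subseteq> {0..<sum_list r}"
  unfolding blk_def using st_le_sum[where r=r and i="Suc i"] by auto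

lemma card_blk: "i < length r \<Longrightarrow> card (blk r i) = r ! i"
  unfolding blk_def by (simp add: st_Suc)

lemma blk_disj: assumes "i \<noteq> j" shows "blk r i \<inter> blk r j = {}"
proof -
  { fix i j :: nat assume "i < j"
    then have "st r (Suc i) \<le> st r j" by (intro st_mono) simp
    then have "blk r i \<inter> blk r j = {}" unfolding blk_def by auto }
  then show ?thesis using assms by (metis Int_commute linorder_neqE_nat)
qed

lemma blk_cover: "j < sum_list r \<Longrightarrow> \<exists>i<length r. j \<in> blk r i"
proof (induction r arbitrary: j)
  case Nil then show ?case by simp
next
  case (Cons a r)
  show ?case
  proof (cases "j < a")
    case True then show ?thesis by (intro exI[of _ 0]) (simp add: blk_Cons_0)
  next
    case False
    then obtain i where "i < length r" "j - a \<in> blk r i" using Cons by (metis add_diff_inverse_nat add_less_cancel_left sum_list.Cons)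
    then show ?thesis using False by (intro exI[of _ "Suc i"]) (auto simp: blk_Cons_Suc' image_iff intro!: bexI[of _ "j-a"])
  qed
qed

lemma blk_unique: "i < length r \<Longrightarrow> i' < length r \<Longrightarrow> j \<in> blk r i \<Longrightarrow> j \<in> blk r i' \<Longrightarrow> i = i'"
  using blk_disj by blast

lemma length_rep_word[simp]: "length (rep_word r as) = sum_list r"
proof -
  have "length (rep_word r as) = sum_list (map (\<lambda>i. r ! i) [0..<length r])"
    unfolding rep_word_def by (simp add: length_concat comp_def)
  also have "\<dots> = sum_list r" by (simp add: map_nth)
  finally show ?thesis .
qed

lemma rep_word_Nil[simp]: "rep_word [] as = []" unfolding rep_word_def by simp

lemma rep_word_Cons: "length as = length r \<Longrightarrow> rep_word (a # r) (b # as) = replicate a b @ rep_word r as"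
proof -
  assume l: "length as = length r"
  have "[0..<length (a # r)] = 0 # map Suc [0..<length r]" by (simp add: map_Suc_upt upt_conv_Cons del: upt_Suc)
  then show ?thesis unfolding rep_word_def by (simp add: comp_def)
qed

lemma rep_word_blk:
  "length as = length r \<Longrightarrow> i < length r \<Longrightarrow> j \<in> blk r i \<Longrightarrow> rep_word r as ! j = as ! i"
proof (induction r arbitrary: as i j)
  case Nil then show ?case by simp
next
  case (Cons a r)
  obtain b as' where as: "as = b # as'" using Cons(2) by (cases as) auto
  have l: "length as' = length r" using Cons(2) as by simp
  show ?case
  proof (cases i)
    case 0 then show ?thesis using Cons(4) as l by (simp add: rep_word_Cons blk_Cons_0 nth_append)
  next
    case (Suc i')
    then obtain j' where j: "j = a + j'" "j' \<in> blk r i'" using Cons(4) by (auto simp: blk_Cons_Suc')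
    have "j' < sum_list r" using blk_sub[of r i'] j(2) by auto
    then show ?thesis using Cons.IH[OF l _ j(2)] Cons(3) Suc as l j(1) by (simp add: rep_word_Cons nth_append)
  qed
qed

lemma map_rep_word: "length as = length r \<Longrightarrow> map g (rep_word r as) = rep_word r (map g as)"
  unfolding rep_word_def by (simp add: map_concat comp_def) (intro arg_cong[where f=concat] map_cong, auto)

lemma rep_word_nth:
  assumes "length as = length r" "j < sum_list r"
  obtains i where "i < length r" "j \<in> blk r i" "rep_word r as ! j = as ! i"
proof -
  obtain i where "i < length r" "j \<in> blk r i" using blk_cover[OF assms(2)] by auto
  then show ?thesis using that rep_word_blk[OF assms(1)] by simp
qed

lemma Young_D: "\<sigma> \<in> Young r \<Longrightarrow> \<sigma> permutes {0..<sum_list r}"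
  "\<sigma> \<in> Young r \<Longrightarrow> i < length r \<Longrightarrow> \<sigma> ` blk r i = blk r i"
  unfolding Young_def by auto

lemma pgrp_Sym: "pgrp (Sym n)"
  unfolding pgrp_def Sym_def
  by (auto simp: finite_permutations permutes_id permutes_compose permutes_inv permutes_bij)

lemma Sym_iff: "\<sigma> \<in> Sym n \<longleftrightarrow> \<sigma> permutes {0..<n}" unfolding Sym_def by simp

lemma Young_Sym: "Young r \<subseteq> Sym (sum_list r)" unfolding Young_def Sym_def by auto

lemma inv_image_eq: "bij \<sigma> \<Longrightarrow> \<sigma> ` B = B \<Longrightarrow> inv \<sigma> ` B = B"
  by (metis bij_is_inj image_inv_f_f)

lemma pgrp_Young: "pgrp (Young r)"
  unfolding pgrp_def
proof (intro conjI ballI)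
  show "finite (Young r)" using Young_Sym pgrpD(1)[OF pgrp_Sym] by (rule finite_subset)
  show "id \<in> Young r" unfolding Young_def by (simp add: permutes_id)
  fix \<sigma> assume s: "\<sigma> \<in> Young r"
  have p: "\<sigma> permutes {0..<sum_list r}" using Young_D(1)[OF s] .
  then show "bij \<sigma>" by (rule permutes_bij)
  show "inv \<sigma> \<in> Young r" unfolding Young_def
    using permutes_inv[OF p] inv_image_eq[OF permutes_bij[OF p] Young_D(2)[OF s]] by simp
  fix \<tau> assume t: "\<tau> \<in> Young r"
  have "(\<sigma> \<circ> \<tau>) ` blk r i = blk r i" if "i < length r" for i
    using Young_D(2)[OF s that] Young_D(2)[OF t that] by (metis image_comp)
  then show "\<sigma> \<circ> \<tau> \<in> Young r" unfolding Young_def using Young_D(1)[OF s] Young_D(1)[OF t]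
    by (simp add: permutes_compose)
qed

lemma Young_blk:
  assumes "\<tau> \<in> Young r" "i < length r" "j \<in> blk r i"
  shows "\<tau> j \<in> blk r i" "inv \<tau> j \<in> blk r i"
proof -
  have "\<tau> j \<in> \<tau> ` blk r i" using assms(3) by (rule imageI)
  then show "\<tau> j \<in> blk r i" unfolding Young_D(2)[OF assms(1,2)] .
  have "inv \<tau> \<in> Young r" using pgrpD(5)[OF pgrp_Young assms(1)] .
  then have e: "inv \<tau> ` blk r i = blk r i" using Young_D(2)[OF _ assms(2)] by simp
  have "inv \<tau> j \<in> inv \<tau> ` blk r i" using assms(3) by (rule imageI)
  then show "inv \<tau> j \<in> blk r i" unfolding e .
qed

lemma Young_fix_word:
  assumes \<tau>: "\<tau> \<in> Young r" and l: "length as = length r"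
  shows "permute_list (inv \<tau>) (rep_word r as) = rep_word r as"
proof (rule nth_equalityI)
  show "length (permute_list (inv \<tau>) (rep_word r as)) = length (rep_word r as)" by simp
  fix k assume "k < length (permute_list (inv \<tau>) (rep_word r as))"
  then have k: "k < sum_list r" by simp
  obtain i where i: "i < length r" "k \<in> blk r i" "rep_word r as ! k = as ! i" using rep_word_nth[OF l k] .
  have "inv \<tau> k \<in> blk r i" using Young_blk(2)[OF \<tau> i(1,2)] .
  then have "rep_word r as ! (inv \<tau> k) = as ! i" using rep_word_blk[OF l i(1)] by simp
  then show "permute_list (inv \<tau>) (rep_word r as) ! k = rep_word r as ! k"
    using k i(3) unfolding permute_list_def by simp
qed

lemma Young_mono:
  assumes s: "sum_list r' = sum_list r"
    and u: "\<And>i'. i' < length r' \<Longrightarrow> \<exists>I. blk r' i' = (\<Union>i\<in>I. blk r i) \<and> I \<subseteq> {..<length r}"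
  shows "Young r \<subseteq> Young r'"
proof
  fix \<sigma> assume \<sigma>: "\<sigma> \<in> Young r"
  show "\<sigma> \<in> Young r'" unfolding Young_def
  proof (intro CollectI conjI allI impI)
    show "\<sigma> permutes {0..<sum_list r'}" using Young_D(1)[OF \<sigma>] s by simp
    fix i' assume "i' < length r'"
    then obtain I where I: "blk r' i' = (\<Union>i\<in>I. blk r i)" "I \<subseteq> {..<length r}" using u by blast
    have "\<sigma> ` (\<Union>i\<in>I. blk r i) = (\<Union>i\<in>I. \<sigma> ` blk r i)" by (rule image_UN)
    also have "\<dots> = (\<Union>i\<in>I. blk r i)"
      by (rule SUP_cong[OF refl]) (use Young_D(2)[OF \<sigma>] I(2) in auto)
    finally show "\<sigma> ` blk r' i' = blk r' i'" using I(1) by simp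
  qed
qed


declare plus_fun_apply[simp del] zero_fun_apply[simp del]

lemma fscale_sum: "fscale c (\<Sum>i\<in>I. f i) = (\<Sum>i\<in>I. fscale c (f i :: _ \<Rightarrow> 'k::field))"
  by (induction I rule: infinite_finite_induct) (auto simp: fscale_def fun_eq_iff algebra_simps zero_fun_apply plus_fun_apply)

lemma coset_sum_add: "coset_sum G H (\<lambda>\<sigma>. f \<sigma> + g \<sigma>) = coset_sum G H f + coset_sum G H g"
  unfolding coset_sum_alt by (simp add: sum.distrib)
lemma coset_sum_diff: "coset_sum G H (\<lambda>\<sigma>. f \<sigma> - g \<sigma>) = coset_sum G H f - coset_sum G H (g :: _ \<Rightarrow> 'b::ab_group_add)"
  unfolding coset_sum_alt by (simp add: sum_subtractf)
lemma coset_sum_fscale: "coset_sum G H (\<lambda>\<sigma>. fscale c (f \<sigma>)) = fscale c (coset_sum G H (f :: _ \<Rightarrow> _ \<Rightarrow> 'k::field))"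
  unfolding coset_sum_alt by (simp add: fscale_sum)
lemma coset_sum_sum: "finite L \<Longrightarrow> coset_sum G H (\<lambda>\<sigma>. \<Sum>l\<in>L. f l \<sigma>) = (\<Sum>l\<in>L. coset_sum G H (f l))"
  unfolding coset_sum_alt by (rule sum.swap)

context SM begin

definition W :: "nat \<Rightarrow> (nat \<Rightarrow> nat) \<Rightarrow> 'm \<Rightarrow> 'a list \<Rightarrow> 'm \<times> 'a list \<Rightarrow> 'k"
  where "W n \<sigma> x w = free_gen (act n \<sigma> x, permute_list (inv \<sigma>) w)"

definition VV :: "'m \<Rightarrow> nat list \<Rightarrow> 'a list \<Rightarrow> 'm \<times> 'a list \<Rightarrow> 'k"
  where "VV x r as = coset_sum (Sym (sum_list r)) (Young r) (\<lambda>\<sigma>. W (sum_list r) \<sigma> x (rep_word r as))"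

lemma beta_of_VV: "beta_of act F x r as = F (VV x r as)"
  unfolding beta_of_def VV_def W_def ..

lemma Minv_iff: "x \<in> Minv M act r \<longleftrightarrow> x \<in> M (sum_list r) \<and> (\<forall>\<tau>\<in>Young r. act (sum_list r) \<tau> x = x)"
  unfolding Minv_def by simp

lemma W_comp:
  assumes \<sigma>: "\<sigma> \<in> Sym n" and \<tau>: "\<tau> \<in> Sym n" and x: "x \<in> M n" and w: "length w = n"
  shows "W n (\<sigma> \<circ> \<tau>) x w = free_gen (act n \<sigma> (act n \<tau> x), permute_list (inv \<sigma>) (permute_list (inv \<tau>) w))"
proof -
  have ps: "\<sigma> permutes {0..<n}" "\<tau> permutes {0..<n}" using \<sigma> \<tau> Sym_iff by auto
  have "inv (\<sigma> \<circ> \<tau>) = inv \<tau> \<circ> inv \<sigma>" using ps by (simp add: o_inv_distrib permutes_bij)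
  moreover have "inv \<sigma> permutes {..<length w}" using permutes_inv[OF ps(1)] w by (simp add: atLeast0LessThan)
  ultimately have "permute_list (inv (\<sigma> \<circ> \<tau>)) w = permute_list (inv \<sigma>) (permute_list (inv \<tau>) w)"
    by (simp add: permute_list_compose)
  then show ?thesis unfolding W_def using act_comp[OF ps x] by simp
qed

lemma W_rinv:
  assumes x: "x \<in> Minv M act r" and l: "length as = length r"
  shows "rinv (Sym (sum_list r)) (Young r) (\<lambda>\<sigma>. W (sum_list r) \<sigma> x (rep_word r as))"
  unfolding rinv_def
proof (intro ballI)
  fix \<sigma> \<tau> assume \<sigma>: "\<sigma> \<in> Sym (sum_list r)" and \<tau>: "\<tau> \<in> Young r"
  have \<tau>': "\<tau> \<in> Sym (sum_list r)" using \<tau> Young_Sym by blast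
  show "W (sum_list r) (\<sigma> \<circ> \<tau>) x (rep_word r as) = W (sum_list r) \<sigma> x (rep_word r as)"
    unfolding W_comp[OF \<sigma> \<tau>' conjunct1[OF x[unfolded Minv_iff]] length_rep_word]
    using x \<tau> Young_fix_word[OF \<tau> l] unfolding Minv_iff W_def by simp
qed

lemma Minv_M: "x \<in> Minv M act r \<Longrightarrow> x \<in> M (sum_list r)" unfolding Minv_iff by simp

lemma Minv_lin: "x \<in> Minv M act r \<Longrightarrow> y \<in> Minv M act r \<Longrightarrow> sM c x + y \<in> Minv M act r"
  unfolding Minv_iff using Young_D(1) by (auto simp: act_add act_scale M_add M_scale)

end

context GA begin

interpretation fm: module "fscale :: 'k \<Rightarrow> ('m \<times> 'a list \<Rightarrow> 'k) \<Rightarrow> _" by (rule module_fscale)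

lemma W_Free: "\<sigma> \<in> Sym n \<Longrightarrow> x \<in> M n \<Longrightarrow> length w = n \<Longrightarrow> W n \<sigma> x w \<in> Free M"
  unfolding W_def by (rule free_gen_Free) (simp add: act_M Sym_iff)

lemma W_push:
  assumes \<sigma>: "\<sigma> \<in> Sym n" and \<tau>: "\<tau> \<in> Sym n" and x: "x \<in> M n" and w: "length w = n"
  shows "push (gen_act act n \<sigma>) (W n \<tau> x w) = W n (\<sigma> \<circ> \<tau>) x w"
proof -
  have "push (gen_act act n \<sigma>) (W n \<tau> x w) = free_gen (act n \<sigma> (act n \<tau> x), permute_list (inv \<sigma>) (permute_list (inv \<tau>) w))"
    unfolding W_def push_free_gen using w by (simp add: gen_act_n)
  then show ?thesis using W_comp[OF assms] by simp
qed

lemma W_push_other: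
  assumes w: "length w \<noteq> n'"
  shows "push (gen_act act n' \<sigma>) (W n \<tau> x w) = W n \<tau> x w"
  unfolding W_def push_free_gen using w by (simp add: gen_act_other)

lemma VV_Free: fixes as :: "'a list" assumes x: "x \<in> Minv M act r" shows "VV x r as \<in> Free M"
  unfolding VV_def coset_sum_alt
proof (rule fm.subspace_sum[OF Free_sub])
  fix C assume C: "C \<in> cosets (Sym (sum_list r)) (Young r)"
  have "rep C \<in> Sym (sum_list r)" using rep_in_G[OF pgrp_Sym pgrp_Young Young_Sym C] .
  then show "W (sum_list r) (rep C) x (rep_word r as) \<in> Free M" by (rule W_Free) (use Minv_M[OF x] in auto)
qed


lemma Iv_sum: "finite I \<Longrightarrow> (\<And>i. i \<in> I \<Longrightarrow> f i \<in> Iv) \<Longrightarrow> (\<Sum>i\<in>I. f i) \<in> Iv"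
proof (induction I rule: finite_induct)
  case empty show ?case using Iv_zero by (simp only: sum.empty)
next
  case (insert j J)
  have e: "sum f (insert j J) = f j + sum f J" using insert(1,2) by (rule sum.insert)
  show ?case unfolding e by (rule Iv_add) (use insert in auto)
qed

lemma W_fin: "finite (fsupp (W n \<sigma> x w))" unfolding W_def by simp

lemma VV_push:
  fixes as :: "'a list"
  assumes x: "x \<in> Minv M act r" and l: "length as = length r" and \<sigma>': "\<sigma>' permutes {0..<n'}"
  shows "push (gen_act act n' \<sigma>') (VV x r as) = VV x r as"
proof -
  let ?n = "sum_list r" and ?w = "rep_word r as"
  let ?G = "Sym ?n" and ?H = "Young r"
  have "push (gen_act act n' \<sigma>') (VV x r as) = (\<Sum>C\<in>cosets ?G ?H. push (gen_act act n' \<sigma>') (W ?n (rep C) x ?w))"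
    unfolding VV_def coset_sum_alt by (rule push_sum[OF finite_cos[OF pgrp_Sym] W_fin])
  also have "\<dots> = VV x r as"
  proof (cases "n' = ?n")
    case True
    have s': "\<sigma>' \<in> ?G" using \<sigma>' True Sym_iff by simp
    have "(\<Sum>C\<in>cosets ?G ?H. push (gen_act act n' \<sigma>') (W ?n (rep C) x ?w)) = (\<Sum>C\<in>cosets ?G ?H. W ?n (\<sigma>' \<circ> rep C) x ?w)"
    proof (rule sum.cong[OF refl])
      fix C assume C: "C \<in> cosets ?G ?H"
      have rC: "rep C \<in> ?G" using rep_in_G[OF pgrp_Sym pgrp_Young Young_Sym C] .
      show "push (gen_act act n' \<sigma>') (W ?n (rep C) x ?w) = W ?n (\<sigma>' \<circ> rep C) x ?w"
        using W_push[OF s' rC Minv_M[OF x] length_rep_word] True by simp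
    qed
    also have "\<dots> = coset_sum ?G ?H (\<lambda>\<sigma>. W ?n (\<sigma>' \<circ> \<sigma>) x ?w)" unfolding coset_sum_alt ..
    also have "\<dots> = VV x r as" unfolding VV_def
      by (rule coset_sum_lmult[OF pgrp_Sym pgrp_Young Young_Sym W_rinv[OF x l] s'])
    finally show ?thesis .
  next
    case False
    have "length ?w \<noteq> n'" using False by simp
    then show ?thesis unfolding VV_def coset_sum_alt using W_push_other[of ?w n'] by simp
  qed
  finally show ?thesis .
qed

lemma VV_Iv: fixes as :: "'a list" assumes x: "x \<in> Minv M act r" and l: "length as = length r"
  shows "VV x r as \<in> Iv"
  unfolding Iv_iff using VV_Free[OF x] VV_push[OF x l] R_zero by simp

lemma W_lin:
  fixes w :: "'a list"
  assumes \<sigma>: "\<sigma> \<in> Sym n" and x: "x \<in> M n" and y: "y \<in> M n" and w: "length w = n"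
  shows "W n \<sigma> (sM c x + y) w - (fscale c (W n \<sigma> x w) + W n \<sigma> y w) \<in> R"
proof -
  have s: "\<sigma> permutes {0..<n}" using \<sigma> Sym_iff by simp
  let ?w = "permute_list (inv \<sigma>) w"
  have lw: "length ?w = n" using w by simp
  have a: "act n \<sigma> (sM c x + y) = sM c (act n \<sigma> x) + act n \<sigma> y"
    using act_add[OF s M_scale[OF x] y] act_scale[OF s x] by simp
  have ax: "act n \<sigma> x \<in> M (length ?w)" "act n \<sigma> y \<in> M (length ?w)" "sM c (act n \<sigma> x) \<in> M (length ?w)"
    using act_M[OF s] x y lw M_scale by auto
  have "W n \<sigma> (sM c x + y) w - (fscale c (W n \<sigma> x w) + W n \<sigma> y w) =
     (free_gen (sM c (act n \<sigma> x) + act n \<sigma> y, ?w) - free_gen (sM c (act n \<sigma> x), ?w) - free_gen (act n \<sigma> y, ?w))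
     + (free_gen (sM c (act n \<sigma> x), ?w) - fscale c (free_gen (act n \<sigma> x, ?w)))"
    unfolding W_def a by (simp add: algebra_simps)
  also have "\<dots> \<in> R" using R_add[OF R_gen1[OF ax(3,2)] R_gen2[OF ax(1)]] .
  finally show ?thesis .
qed

lemma VV_lin:
  fixes as :: "'a list"
  assumes x: "x \<in> Minv M act r" and y: "y \<in> Minv M act r"
  shows "VV (sM c x + y) r as - (fscale c (VV x r as) + VV y r as) \<in> R"
proof -
  have "VV (sM c x + y) r as - (fscale c (VV x r as) + VV y r as) =
    coset_sum (Sym (sum_list r)) (Young r) (\<lambda>\<sigma>. W (sum_list r) \<sigma> (sM c x + y) (rep_word r as) -
       (fscale c (W (sum_list r) \<sigma> x (rep_word r as)) + W (sum_list r) \<sigma> y (rep_word r as)))"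
    unfolding VV_def coset_sum_diff coset_sum_add coset_sum_fscale ..
  also have "\<dots> \<in> R" unfolding coset_sum_alt
  proof (rule R_sum)
    fix C assume C: "C \<in> cosets (Sym (sum_list r)) (Young r)"
    have "rep C \<in> Sym (sum_list r)" using rep_in_G[OF pgrp_Sym pgrp_Young Young_Sym C] .
    then show "W (sum_list r) (rep C) (sM c x + y) (rep_word r as) -
       (fscale c (W (sum_list r) (rep C) x (rep_word r as)) + W (sum_list r) (rep C) y (rep_word r as)) \<in> R"
      by (rule W_lin) (use Minv_M[OF x] Minv_M[OF y] in auto)
  qed
  finally show ?thesis .
qed

end

locale GO = GA sM M act sA
  for sM :: "'k::field \<Rightarrow> 'm::ab_group_add \<Rightarrow> 'm" and M :: "nat \<Rightarrow> 'm set"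
    and act :: "nat \<Rightarrow> (nat \<Rightarrow> nat) \<Rightarrow> 'm \<Rightarrow> 'm" and sA :: "'k \<Rightarrow> 'a::ab_group_add \<Rightarrow> 'a" +
  fixes F :: "('m \<times> 'a list \<Rightarrow> 'k) \<Rightarrow> 'a"
  assumes go: "gamma_obj sM M act sA F"
begin

lemma go1: "\<forall>v\<in>Iv. \<forall>w\<in>Iv. F (v + w) = F v + F w"
  using go unfolding gamma_obj_def Iv_def by (elim conjE)
lemma go2: "\<forall>v\<in>Iv. \<forall>c. F (fscale c v) = sA c (F v)"
  using go unfolding gamma_obj_def Iv_def by (elim conjE)
lemma go3: "\<forall>v\<in>R. F v = 0"
  using go unfolding gamma_obj_def Iv_def by (elim conjE)
lemma F_add: "v \<in> Iv \<Longrightarrow> w \<in> Iv \<Longrightarrow> F (v + w) = F v + F w"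
  using go1 by simp
lemma F_scale: "v \<in> Iv \<Longrightarrow> F (fscale c v) = sA c (F v)"
  using go2 by simp
lemma F_R: "v \<in> R \<Longrightarrow> F v = 0"
  using go3 by simp

lemma F_eq: assumes "v \<in> Iv" "w - v \<in> R" shows "F w = F v" "w \<in> Iv"
proof -
  have d: "w - v \<in> Iv" using R_Iv[OF assms(2)] .
  have e: "v + (w - v) = w" by simp
  have "F (v + (w - v)) = F v + F (w - v)" by (rule F_add[OF assms(1) d])
  then show "F w = F v" unfolding e using F_R[OF assms(2)] by simp
  show "w \<in> Iv" using Iv_add[OF assms(1) d] unfolding e .
qed

lemma F_sum: "finite I \<Longrightarrow> (\<And>i. i \<in> I \<Longrightarrow> f i \<in> Iv) \<Longrightarrow> F (\<Sum>i\<in>I. f i) = (\<Sum>i\<in>I. F (f i))"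
proof (induction I rule: finite_induct)
  case empty
  show ?case using F_R[OF R_zero] by (simp only: sum.empty)
next
  case (insert i I)
  have "(\<Sum>i\<in>I. f i) \<in> Iv" by (rule Iv_sum) (use insert in auto)
  then have "F (f i + sum f I) = F (f i) + F (sum f I)" using insert F_add[of "f i" "\<Sum>i\<in>I. f i"] by blast
  moreover have "F (sum f I) = (\<Sum>i\<in>I. F (f i))" by (rule insert.IH) (use insert.prems in auto)
  ultimately show ?case unfolding sum.insert[OF insert(1,2)] by simp
qed

lemma beta6:
  assumes x: "x \<in> Minv M act r" and y: "y \<in> Minv M act r" and l: "length as = length r"
  shows "beta_of act F (sM c x + y) r as = sA c (beta_of act F x r as) + beta_of act F y r as"
proof -
  have ix: "VV x r as \<in> Iv" "VV y r as \<in> Iv" using VV_Iv x y l by auto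
  have "F (VV (sM c x + y) r as) = F (fscale c (VV x r as) + VV y r as)"
    by (rule F_eq(1)[OF Iv_add[OF Iv_scale[OF ix(1)] ix(2)] VV_lin[OF x y]])
  also have "\<dots> = sA c (F (VV x r as)) + F (VV y r as)"
    using F_add[OF Iv_scale[OF ix(1)] ix(2)] F_scale[OF ix(1)] by simp
  finally show ?thesis unfolding beta_of_VV .
qed

end


declare minus_apply[simp del] uminus_apply[simp del]

lemma Young_Cons0: "Young (0 # r) = Young r"
proof -
  have "(\<forall>i<length (0 # r). \<sigma> ` blk (0 # r) i = blk (0 # r) i) \<longleftrightarrow> (\<forall>i<length r. \<sigma> ` blk r i = blk r i)" for \<sigma>
  proof
    assume a: "\<forall>i<length (0 # r). \<sigma> ` blk (0 # r) i = blk (0 # r) i"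
    show "\<forall>i<length r. \<sigma> ` blk r i = blk r i"
    proof (intro allI impI)
      fix i assume "i < length r"
      then have "\<sigma> ` blk (0 # r) (Suc i) = blk (0 # r) (Suc i)" using a by simp
      then show "\<sigma> ` blk r i = blk r i" by (simp add: blk_Cons_Suc')
    qed
  next
    assume a: "\<forall>i<length r. \<sigma> ` blk r i = blk r i"
    show "\<forall>i<length (0 # r). \<sigma> ` blk (0 # r) i = blk (0 # r) i"
    proof (intro allI impI)
      fix i assume i: "i < length (0 # r)"
      show "\<sigma> ` blk (0 # r) i = blk (0 # r) i"
      proof (cases i)
        case 0 then show ?thesis by (simp add: blk_Cons_0)
      next
        case (Suc i') then show ?thesis using a i by (simp add: blk_Cons_Suc')
      qed
    qed
  qed
  then show ?thesis unfolding Young_def by simp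
qed

context GO begin

lemma beta2:
  assumes l: "length as = length r"
  shows "beta_of act F x (0 # r) (a0 # as) = beta_of act F x r as"
  unfolding beta_of_VV VV_def using l by (simp add: Young_Cons0 rep_word_Cons)

lemma scale_multi:
  fixes v :: "'a list"
  assumes y: "y \<in> M (length v)" and P: "finite P" "P \<subseteq> {..<length v}"
  shows "length v' = length v \<Longrightarrow> (\<And>j. j < length v \<Longrightarrow> v' ! j = (if j \<in> P then sA c (v ! j) else v ! j)) \<Longrightarrow>
    free_gen (y, v') - fscale (c ^ card P) (free_gen (y, v)) \<in> R"
  using P
proof (induction P arbitrary: v' rule: finite_induct)
  case empty
  then have "v' = v" by (intro nth_equalityI) auto
  then show ?case using R_zero by (simp add: fscale_def)
next
  case (insert p P)
  define v'' where "v'' = v'[p := v ! p]"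
  have p: "p < length v" using insert.prems(3) by simp
  have l'': "length v'' = length v" using insert.prems(1) v''_def by simp
  have n'': "v'' ! j = (if j \<in> P then sA c (v ! j) else v ! j)" if "j < length v" for j
    using insert.prems(2)[OF that] insert.hyps(2) that insert.prems(1) unfolding v''_def
    by (cases "j = p") (auto simp: nth_list_update)
  have IH: "free_gen (y, v'') - fscale (c ^ card P) (free_gen (y, v)) \<in> R"
    using insert.IH[OF l'' n''] insert.prems(3) by simp
  have vp: "v' = v''[p := sA c (v'' ! p)]"
  proof (rule nth_equalityI)
    show "length v' = length (v''[p := sA c (v'' ! p)])" using l'' insert.prems(1) by simp
    fix j assume "j < length v'"
    then show "v' ! j = v''[p := sA c (v'' ! p)] ! j"
      using insert.prems(1,2) p l'' unfolding v''_def by (auto simp: nth_list_update)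
  qed
  have g4: "free_gen (y, v') - fscale c (free_gen (y, v'')) \<in> R"
    unfolding vp using R_gen4[of y v'' p c] y l'' p by simp
  have "free_gen (y, v') - fscale (c ^ card (insert p P)) (free_gen (y, v)) =
     (free_gen (y, v') - fscale c (free_gen (y, v''))) + fscale c (free_gen (y, v'') - fscale (c ^ card P) (free_gen (y, v)))"
    using insert.hyps by (simp add: fscale_def fun_eq_iff algebra_simps minus_apply plus_fun_apply)
  also have "\<dots> \<in> R" using R_add[OF g4 R_scale[OF IH]] .
  finally show ?case .
qed


lemma beta3:
  assumes x: "x \<in> Minv M act (r1 # r)" and l: "length as = length r"
  shows "beta_of act F x (r1 # r) (sA c a1 # as) = sA (c ^ r1) (beta_of act F x (r1 # r) (a1 # as))"
proof -
  let ?r = "r1 # r"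
  let ?n = "sum_list ?r"
  define u where "u = rep_word r as"
  have lu: "length u = sum_list r" unfolding u_def by simp
  have w: "rep_word ?r (a1 # as) = replicate r1 a1 @ u" unfolding u_def using l by (simp add: rep_word_Cons)
  have w': "rep_word ?r (sA c a1 # as) = replicate r1 (sA c a1) @ u" unfolding u_def using l by (simp add: rep_word_Cons)
  have xM: "x \<in> M ?n" using Minv_M[OF x] .
  have trm: "W ?n \<sigma> x (rep_word ?r (sA c a1 # as)) - fscale (c ^ r1) (W ?n \<sigma> x (rep_word ?r (a1 # as))) \<in> R"
    if \<sigma>: "\<sigma> \<in> Sym ?n" for \<sigma>
  proof -
    have sp: "\<sigma> permutes {0..<?n}" using \<sigma> Sym_iff by simp
    let ?v = "permute_list (inv \<sigma>) (replicate r1 a1 @ u)"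
    let ?v' = "permute_list (inv \<sigma>) (replicate r1 (sA c a1) @ u)"
    define P where "P = \<sigma> ` {0..<r1}"
    have lv: "length ?v = ?n" using lu by simp
    have Pi: "j \<in> P \<longleftrightarrow> inv \<sigma> j < r1" if "j < ?n" for j
    proof
      assume "j \<in> P"
      then obtain k where "k < r1" "j = \<sigma> k" unfolding P_def by auto
      then show "inv \<sigma> j < r1" using permutes_inverses(2)[OF sp] by simp
    next
      assume "inv \<sigma> j < r1"
      moreover have "j = \<sigma> (inv \<sigma> j)" using permutes_inverses(1)[OF sp] by simp
      ultimately show "j \<in> P" unfolding P_def by auto
    qed
    have cP: "card P = r1" unfolding P_def
      using card_image[OF inj_on_subset[OF permutes_inj[OF sp] subset_UNIV]] by simp
    have PS: "P \<subseteq> {..<length ?v}" unfolding P_def lv using perm_lt[OF sp] by auto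
    have y: "act ?n \<sigma> x \<in> M (length ?v)" using act_M[OF sp xM] lv by simp
    have cond: "?v' ! j = (if j \<in> P then sA c (?v ! j) else ?v ! j)" if j: "j < length ?v" for j
    proof -
      have jn: "j < ?n" using j lv by simp
      have k: "inv \<sigma> j < ?n" using perm_lt[OF perm_inv[OF sp] jn] .
      show ?thesis using jn k lu Pi[OF jn] unfolding permute_list_def by (auto simp: nth_append)
    qed
    have "free_gen (act ?n \<sigma> x, ?v') - fscale (c ^ card P) (free_gen (act ?n \<sigma> x, ?v)) \<in> R"
      by (rule scale_multi[OF y _ PS]) (use cond lu in \<open>auto simp: P_def\<close>)
    then show ?thesis unfolding W_def w w' cP .
  qed
  have ix: "VV x ?r (a1 # as) \<in> Iv" using VV_Iv[OF x] l by simp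
  have "VV x ?r (sA c a1 # as) - fscale (c ^ r1) (VV x ?r (a1 # as)) =
     coset_sum (Sym ?n) (Young ?r) (\<lambda>\<sigma>. W ?n \<sigma> x (rep_word ?r (sA c a1 # as)) - fscale (c ^ r1) (W ?n \<sigma> x (rep_word ?r (a1 # as))))"
    unfolding VV_def coset_sum_diff coset_sum_fscale ..
  also have "\<dots> \<in> R" unfolding coset_sum_alt
    by (rule R_sum, rule trm, rule rep_in_G[OF pgrp_Sym pgrp_Young Young_Sym])
  finally have "VV x ?r (sA c a1 # as) - fscale (c ^ r1) (VV x ?r (a1 # as)) \<in> R" .
  then have "F (VV x ?r (sA c a1 # as)) = F (fscale (c ^ r1) (VV x ?r (a1 # as)))"
    by (rule F_eq(1)[OF Iv_scale[OF ix]])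
  then show ?thesis unfolding beta_of_VV using F_scale[OF ix] by simp
qed

lemma gamma_map_VV:
  fixes as :: "'a list" and g :: "'a \<Rightarrow> 'b"
  assumes l: "length as = length r"
  shows "gamma_map g (VV x r as) = VV x r (map g as)"
proof -
  have pf: "push (\<lambda>(x, as). (x, map g as)) (W (sum_list r) \<sigma> x (rep_word r as)) = W (sum_list r) \<sigma> x (rep_word r (map g as))"
    if "\<sigma> \<in> Sym (sum_list r)" for \<sigma>
  proof -
    have ip: "inv \<sigma> permutes {..<length (rep_word r as)}" using that Sym_iff permutes_inv
      by (simp add: atLeast0LessThan)
    show ?thesis unfolding W_def push_free_gen
      using permute_list_map[OF ip, of g] map_rep_word[OF l, of g] by simp
  qed
  show ?thesis unfolding gamma_map_def VV_def coset_sum_alt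
    apply (subst push_sum[OF finite_cos[OF pgrp_Sym] W_fin])
    apply (rule sum.cong[OF refl])
    by (rule pf, rule rep_in_G[OF pgrp_Sym pgrp_Young Young_Sym])
qed

end


lemma st_tele: "a \<le> b \<Longrightarrow> b \<le> length r \<Longrightarrow> st r b = st r a + (\<Sum>i\<in>{a..<b}. r ! i)"
proof (induction b rule: dec_induct)
  case base then show ?case by simp
next
  case (step b)
  then show ?case by (simp add: st_Suc)
qed

lemma blk_union: "a \<le> b \<Longrightarrow> (\<Union>i\<in>{a..<b}. blk r i) = {st r a ..< st r b}"
proof (induction b rule: dec_induct)
  case base then show ?case by simp
next
  case (step b)
  have "{a..<Suc b} = insert b {a..<b}" using step(1) by auto
  then have "(\<Union>i\<in>{a..<Suc b}. blk r i) = blk r b \<union> {st r a ..< st r b}" using step(3) by simp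
  also have "\<dots> = {st r a ..< st r (Suc b)}" unfolding blk_def
    using st_mono[where i=a and j=b and r=r] st_Suc_ge[where r=r and i=b] step(1) by auto
  finally show ?case .
qed

lemma comp_merge_len[simp]: "length (comp_merge q r) = length q" unfolding comp_merge_def by simp

lemma comp_merge_nth: "j < length q \<Longrightarrow> comp_merge q r ! j = (\<Sum>i\<in>blk q j. r ! i)"
  unfolding comp_merge_def by simp

lemma comp_merge_st:
  assumes q: "sum_list q = length r"
  shows "j \<le> length q \<Longrightarrow> st (comp_merge q r) j = st r (st q j)"
proof (induction j)
  case 0 then show ?case by simp
next
  case (Suc j)
  then have j: "j < length q" by simp
  have "st (comp_merge q r) (Suc j) = st (comp_merge q r) j + comp_merge q r ! j" using j by (simp add: st_Suc)
  also have "\<dots> = st r (st q j) + (\<Sum>i\<in>{st q j..<st q (Suc j)}. r ! i)"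
    using Suc j by (simp add: comp_merge_nth blk_def)
  also have "\<dots> = st r (st q (Suc j))"
    using st_tele[of "st q j" "st q (Suc j)" r] st_Suc_ge[where r=q and i=j] st_le_sum[where i="Suc j" and r=q] q by simp
  finally show ?case .
qed

lemma comp_merge_sum:
  assumes q: "sum_list q = length r"
  shows "sum_list (comp_merge q r) = sum_list r"
proof -
  have "sum_list (comp_merge q r) = st (comp_merge q r) (length q)" by simp
  also have "\<dots> = st r (st q (length q))" using comp_merge_st[OF q, of "length q"] by simp
  also have "\<dots> = sum_list r" using q by simp
  finally show ?thesis .
qed

lemma comp_merge_blk:
  assumes q: "sum_list q = length r" and j: "j < length q"
  shows "blk (comp_merge q r) j = (\<Union>i\<in>blk q j. blk r i)" "blk q j \<subseteq> {..<length r}"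
proof -
  show "blk (comp_merge q r) j = (\<Union>i\<in>blk q j. blk r i)"
    unfolding blk_def[of "comp_merge q r"] comp_merge_st[OF q] comp_merge_st[OF q, of "Suc j"]
    using j blk_union[OF st_Suc_ge[where r=q and i=j], of r] comp_merge_st[OF q, of j] comp_merge_st[OF q, of "Suc j"]
    by (simp add: blk_def)
  show "blk q j \<subseteq> {..<length r}" using blk_sub[where r=q and i=j] q by auto
qed

lemma rep_word_merge:
  assumes q: "sum_list q = length r" and l: "length as = length q"
  shows "rep_word r (rep_word q as) = rep_word (comp_merge q r) as"
proof (rule nth_equalityI)
  show "length (rep_word r (rep_word q as)) = length (rep_word (comp_merge q r) as)"
    using comp_merge_sum[OF q] by simp
  fix k assume "k < length (rep_word r (rep_word q as))"
  then have k: "k < sum_list r" by simp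
  obtain i where i: "i < length r" "k \<in> blk r i" using blk_cover[OF k] by blast
  have "i < sum_list q" using i q by simp
  then obtain j where j: "j < length q" "i \<in> blk q j" using blk_cover by blast
  have lw: "length (rep_word q as) = length r" using q by simp
  have "rep_word r (rep_word q as) ! k = rep_word q as ! i" using rep_word_blk[OF lw i] .
  also have "\<dots> = as ! j" using rep_word_blk[OF l j] .
  also have "\<dots> = rep_word (comp_merge q r) as ! k"
  proof -
    have "k \<in> blk (comp_merge q r) j" using comp_merge_blk(1)[OF q j(1)] i j by blast
    then show ?thesis using rep_word_blk[of as "comp_merge q r" j k] l j by simp
  qed
  finally show "rep_word r (rep_word q as) ! k = rep_word (comp_merge q r) as ! k" .
qed

lemma Young_merge:
  assumes q: "sum_list q = length r"
  shows "Young r \<subseteq> Young (comp_merge q r)"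
proof (rule Young_mono)
  show "sum_list (comp_merge q r) = sum_list r" using comp_merge_sum[OF q] .
  fix j assume "j < length (comp_merge q r)"
  then have j: "j < length q" by simp
  show "\<exists>I. blk (comp_merge q r) j = (\<Union>i\<in>I. blk r i) \<and> I \<subseteq> {..<length r}"
    using comp_merge_blk[OF q j] by blast
qed

context GA begin

lemma free_gen_sum:
  fixes w :: "'a list"
  assumes "finite D" "\<And>d. d \<in> D \<Longrightarrow> a d \<in> M (length w)"
  shows "free_gen (\<Sum>d\<in>D. a d, w) - (\<Sum>d\<in>D. free_gen (a d, w)) \<in> R"
  using assms
proof (induction D rule: finite_induct)
  case empty
  have "free_gen (0 + 0, w) - free_gen (0, w) - free_gen (0, w) \<in> R" using R_gen1 M_zero by blast
  then have "- free_gen (0, w) \<in> R" by simp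
  then have "free_gen (0, w) \<in> R" using R_neg by fastforce
  then show ?case by simp
next
  case (insert d D)
  have sM: "(\<Sum>d\<in>D. a d) \<in> M (length w)" using M_sum[of D a "length w"] insert by auto
  have g: "free_gen (a d + (\<Sum>d\<in>D. a d), w) - free_gen (a d, w) - free_gen (\<Sum>d\<in>D. a d, w) \<in> R"
    using R_gen1[OF _ sM] insert by simp
  have "free_gen (\<Sum>d\<in>insert d D. a d, w) - (\<Sum>d\<in>insert d D. free_gen (a d, w)) =
     (free_gen (a d + (\<Sum>d\<in>D. a d), w) - free_gen (a d, w) - free_gen (\<Sum>d\<in>D. a d, w)) +
     (free_gen (\<Sum>d\<in>D. a d, w) - (\<Sum>d\<in>D. free_gen (a d, w)))"
    using insert(1,2) by simp
  also have "\<dots> \<in> R" using R_add[OF g insert.IH] insert by simp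
  finally show ?case .
qed

end

context GO begin

lemma beta4:
  assumes x: "x \<in> Minv M act r" and q: "q \<in> Comp (length as) (length r)"
  shows "beta_of act F x r (rep_word q as) =
    beta_of act F (coset_sum (Young (comp_merge q r)) (Young r) (\<lambda>\<sigma>. act (sum_list r) \<sigma> x)) (comp_merge q r) as"
proof -
  have ql: "length q = length as" "sum_list q = length r" using q unfolding Comp_def by auto
  define n where "n = sum_list r"
  define r' where "r' = comp_merge q r"
  define w0 where "w0 = rep_word q as"
  define w where "w = rep_word r w0"
  define Y where "Y = Young r"
  define Y' where "Y' = Young r'"
  define G where "G = Sym n"
  define y where "y = coset_sum Y' Y (\<lambda>\<sigma>. act n \<sigma> x)"
  have sr': "sum_list r' = n" unfolding r'_def n_def using comp_merge_sum[OF ql(2)] .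
  have ww: "rep_word r' as = w" unfolding w_def w0_def r'_def using rep_word_merge[OF ql(2) ql(1)[symmetric]] by simp
  have lw0: "length w0 = length r" unfolding w0_def using ql by simp
  have lw: "length w = n" unfolding w_def n_def by simp
  have lr': "length as = length r'" unfolding r'_def using ql by simp
  have YY': "Y \<subseteq> Y'" unfolding Y_def Y'_def r'_def using Young_merge[OF ql(2)] .
  have Y'G: "Y' \<subseteq> G" unfolding Y'_def G_def using Young_Sym[of r'] sr' by simp
  have YG: "Y \<subseteq> G" using YY' Y'G by simp
  have pG: "pgrp G" "pgrp Y" "pgrp Y'" unfolding G_def Y_def Y'_def using pgrp_Sym pgrp_Young by auto
  have xM: "x \<in> M n" using Minv_M[OF x] n_def by simp
  have repD: "rep D \<in> Y'" if "D \<in> cosets Y' Y" for D using rep_in_G[OF pG(3,2) YY' that] .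
  have pt: "W n \<sigma> y w - coset_sum Y' Y (\<lambda>\<tau>. W n (\<sigma> \<circ> \<tau>) x w) \<in> R" if \<sigma>: "\<sigma> \<in> G" for \<sigma>
  proof -
    have sp: "\<sigma> permutes {0..<n}" using \<sigma> G_def Sym_iff by simp
    have aD: "act n (rep D) x \<in> M n" if "D \<in> cosets Y' Y" for D
      using act_M[OF _ xM] repD[OF that] Y'G G_def Sym_iff by blast
    have "act n \<sigma> y = (\<Sum>D\<in>cosets Y' Y. act n \<sigma> (act n (rep D) x))"
      unfolding y_def coset_sum_alt by (rule act_sum[OF sp finite_cos[OF pG(3)] aD])
    then have e1: "W n \<sigma> y w = free_gen (\<Sum>D\<in>cosets Y' Y. act n \<sigma> (act n (rep D) x), permute_list (inv \<sigma>) w)"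
      unfolding W_def by simp
    have e2: "coset_sum Y' Y (\<lambda>\<tau>. W n (\<sigma> \<circ> \<tau>) x w) = (\<Sum>D\<in>cosets Y' Y. free_gen (act n \<sigma> (act n (rep D) x), permute_list (inv \<sigma>) w))"
      unfolding coset_sum_alt
    proof (rule sum.cong[OF refl])
      fix D assume D: "D \<in> cosets Y' Y"
      have rG: "rep D \<in> G" using repD[OF D] Y'G by blast
      have "permute_list (inv (rep D)) w = w" using Young_fix_word[of "rep D" r' as] repD[OF D] lr' ww Y'_def by simp
      then show "W n (\<sigma> \<circ> rep D) x w = free_gen (act n \<sigma> (act n (rep D) x), permute_list (inv \<sigma>) w)"
        using W_comp[OF _ _ xM lw] \<sigma> rG G_def by simp
    qed
    show ?thesis unfolding e1 e2
      by (rule free_gen_sum[OF finite_cos[OF pG(3)]]) (use act_M[OF sp] aD lw in auto)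
  qed
  have VVy: "VV y r' as = coset_sum G Y' (\<lambda>\<sigma>. W n \<sigma> y w)" unfolding VV_def sr' ww G_def Y'_def ..
  have "VV y r' as - coset_sum G Y' (\<lambda>\<sigma>. coset_sum Y' Y (\<lambda>\<tau>. W n (\<sigma> \<circ> \<tau>) x w)) =
    coset_sum G Y' (\<lambda>\<sigma>. W n \<sigma> y w - coset_sum Y' Y (\<lambda>\<tau>. W n (\<sigma> \<circ> \<tau>) x w))"
    unfolding VVy coset_sum_diff ..
  also have "\<dots> \<in> R" unfolding coset_sum_alt[of G Y']
    by (rule R_sum, rule pt, rule rep_in_G[OF pG(1,3) Y'G])
  finally have "VV y r' as - coset_sum G Y' (\<lambda>\<sigma>. coset_sum Y' Y (\<lambda>\<tau>. W n (\<sigma> \<circ> \<tau>) x w)) \<in> R" .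
  moreover have "coset_sum G Y' (\<lambda>\<sigma>. coset_sum Y' Y (\<lambda>\<tau>. W n (\<sigma> \<circ> \<tau>) x w)) = VV x r w0"
    unfolding VV_def w_def[symmetric] n_def[symmetric] G_def[symmetric] Y_def[symmetric]
    by (rule coset_sum_tower[symmetric, OF pG(1) pG(3) Y'G pG(2) YY'])
       (use W_rinv[OF x lw0] in \<open>simp add: n_def G_def Y_def w_def\<close>)
  ultimately have "VV y r' as - VV x r w0 \<in> R" by simp
  then have "F (VV y r' as) = F (VV x r w0)" using F_eq(1)[OF VV_Iv[OF x lw0]] by blast
  then show ?thesis unfolding beta_of_VV y_def r'_def w0_def n_def Y_def Y'_def by simp
qed

end


definition mix :: "nat set \<Rightarrow> nat set \<Rightarrow> 'a \<Rightarrow> 'a \<Rightarrow> 'a list \<Rightarrow> 'a list" where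
  "mix P S a0 a1 v = map (\<lambda>j. if j \<in> S then a0 else if j \<in> P then a1 else v ! j) [0..<length v]"

lemma mix_len[simp]: "length (mix P S a0 a1 v) = length v" unfolding mix_def by simp
lemma mix_nth: "j < length v \<Longrightarrow> mix P S a0 a1 v ! j = (if j \<in> S then a0 else if j \<in> P then a1 else v ! j)"
  unfolding mix_def by simp

context GA begin

lemma add_multi:
  fixes v :: "'a list"
  assumes y: "y \<in> M (length v)" and P: "finite P" "P \<subseteq> {..<length v}"
    and vP: "\<And>j. j \<in> P \<Longrightarrow> v ! j = a0 + a1"
  shows "free_gen (y, v) - (\<Sum>S\<in>Pow P. free_gen (y, mix P S a0 a1 v)) \<in> R"
  using P y vP
proof (induction P arbitrary: v rule: finite_induct)
  case empty
  have "mix {} {} a0 a1 v = v" by (rule nth_equalityI) (auto simp: mix_nth)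
  then show ?case using R_zero by simp
next
  case (insert p P)
  have p: "p < length v" using insert.prems(1) by simp
  define v0 where "v0 = v[p := a0]"
  define v1 where "v1 = v[p := a1]"
  have l01: "length v0 = length v" "length v1 = length v" unfolding v0_def v1_def by auto
  have IH0: "free_gen (y, v0) - (\<Sum>S\<in>Pow P. free_gen (y, mix P S a0 a1 v0)) \<in> R"
    by (rule insert.IH) (use insert.prems insert.hyps l01 in \<open>auto simp: v0_def nth_list_update\<close>)
  have IH1: "free_gen (y, v1) - (\<Sum>S\<in>Pow P. free_gen (y, mix P S a0 a1 v1)) \<in> R"
    by (rule insert.IH) (use insert.prems insert.hyps l01 in \<open>auto simp: v1_def nth_list_update\<close>)
  have vv: "v[p := a0 + a1] = v" using insert.prems(3)[of p] p by (metis insertI1 list_update_id)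
  have g3: "free_gen (y, v) - free_gen (y, v0) - free_gen (y, v1) \<in> R"
    using R_gen3[of y v p a0 a1] insert.prems(2) p unfolding vv v0_def v1_def by simp
  have m1: "mix (insert p P) S a0 a1 v = mix P S a0 a1 v1" if "S \<in> Pow P" for S
    using that insert.hyps(2) l01 by (intro nth_equalityI) (auto simp: mix_nth v1_def nth_list_update)
  have m0: "mix (insert p P) (insert p S) a0 a1 v = mix P S a0 a1 v0" if "S \<in> Pow P" for S
    using that insert.hyps(2) l01 by (intro nth_equalityI) (auto simp: mix_nth v0_def nth_list_update)
  have "(\<Sum>S\<in>Pow (insert p P). free_gen (y, mix (insert p P) S a0 a1 v)) =
     (\<Sum>S\<in>Pow P. free_gen (y, mix (insert p P) S a0 a1 v)) +
     (\<Sum>S\<in>insert p ` Pow P. free_gen (y, mix (insert p P) S a0 a1 v))"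
    unfolding Pow_insert
    by (rule sum.union_disjoint) (use insert.hyps in auto)
  also have "(\<Sum>S\<in>insert p ` Pow P. free_gen (y, mix (insert p P) S a0 a1 v)) =
      (\<Sum>S\<in>Pow P. free_gen (y, mix (insert p P) (insert p S) a0 a1 v))"
  proof (subst sum.reindex)
    show "inj_on (insert p) (Pow P)" unfolding inj_on_def using insert.hyps(2)
      by (metis PowD insert_ident subsetD)
  qed simp
  also have "\<dots> = (\<Sum>S\<in>Pow P. free_gen (y, mix P S a0 a1 v0))" using m0 by simp
  also have "(\<Sum>S\<in>Pow P. free_gen (y, mix (insert p P) S a0 a1 v)) = (\<Sum>S\<in>Pow P. free_gen (y, mix P S a0 a1 v1))"
    using m1 by simp
  finally have e: "(\<Sum>S\<in>Pow (insert p P). free_gen (y, mix (insert p P) S a0 a1 v)) =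
     (\<Sum>S\<in>Pow P. free_gen (y, mix P S a0 a1 v1)) + (\<Sum>S\<in>Pow P. free_gen (y, mix P S a0 a1 v0))" .
  have "free_gen (y, v) - (\<Sum>S\<in>Pow (insert p P). free_gen (y, mix (insert p P) S a0 a1 v)) =
     (free_gen (y, v) - free_gen (y, v0) - free_gen (y, v1)) +
     (free_gen (y, v0) - (\<Sum>S\<in>Pow P. free_gen (y, mix P S a0 a1 v0))) +
     (free_gen (y, v1) - (\<Sum>S\<in>Pow P. free_gen (y, mix P S a0 a1 v1)))"
    unfolding e by (simp add: algebra_simps)
  also have "\<dots> \<in> R" using R_add[OF R_add[OF g3 IH0] IH1] .
  finally show ?case .
qed

end
lemma Y_blk0: "\<tau> \<in> Young (r1 # r) \<Longrightarrow> \<tau> ` {0..<r1} = {0..<r1}"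
  using Young_D(2)[of \<tau> "r1 # r" 0] by (simp add: blk_Cons_0)

lemma blk_l_1: "l \<le> r1 \<Longrightarrow> blk (l # (r1 - l) # r) (Suc 0) = {l..<r1}"
  by (simp add: blk_Cons_Suc)

lemma blk_l_SS: "l \<le> r1 \<Longrightarrow> blk (l # (r1 - l) # r) (Suc (Suc i)) = blk (r1 # r) (Suc i)"
  by (simp add: blk_Cons_Suc)

lemma Young_l_sub:
  assumes l: "l \<le> r1"
  shows "Young (l # (r1 - l) # r) \<subseteq> Young (r1 # r)"
proof (rule Young_mono)
  show "sum_list (r1 # r) = sum_list (l # (r1 - l) # r)" using l by simp
  fix i' assume i': "i' < length (r1 # r)"
  show "\<exists>I. blk (r1 # r) i' = (\<Union>i\<in>I. blk (l # (r1 - l) # r) i) \<and> I \<subseteq> {..<length (l # (r1 - l) # r)}"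
  proof (cases i')
    case 0
    have "blk (r1 # r) i' = (\<Union>i\<in>{0, Suc 0}. blk (l # (r1 - l) # r) i)"
      using 0 l by (auto simp: blk_Cons_0 blk_l_1)
    then show ?thesis by (intro exI[of _ "{0, Suc 0}"]) auto
  next
    case (Suc i)
    have "blk (r1 # r) i' = (\<Union>i\<in>{Suc (Suc i)}. blk (l # (r1 - l) # r) i)"
      using Suc l by (simp add: blk_l_SS)
    then show ?thesis using i' Suc by (intro exI[of _ "{Suc (Suc i)}"]) auto
  qed
qed

lemma Young_l_crit:
  assumes l: "l \<le> r1" and \<rho>: "\<rho> \<in> Young (r1 # r)" and \<rho>l: "\<rho> ` {0..<l} = {0..<l}"
  shows "\<rho> \<in> Young (l # (r1 - l) # r)"
  unfolding Young_def
proof (intro CollectI conjI allI impI)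
  show "\<rho> permutes {0..<sum_list (l # (r1 - l) # r)}" using Young_D(1)[OF \<rho>] l by simp
  have inj: "inj \<rho>" using Young_D(1)[OF \<rho>] permutes_inj by blast
  fix i assume i: "i < length (l # (r1 - l) # r)"
  show "\<rho> ` blk (l # (r1 - l) # r) i = blk (l # (r1 - l) # r) i"
  proof (cases i)
    case 0 then show ?thesis using \<rho>l by (simp add: blk_Cons_0)
  next
    case (Suc i')
    show ?thesis
    proof (cases i')
      case 0
      have e: "{l..<r1} = {0..<r1} - {0..<l}" by auto
      have "\<rho> ` {l..<r1} = \<rho> ` {0..<r1} - \<rho> ` {0..<l}" unfolding e by (rule image_set_diff[OF inj])
      then show ?thesis using Suc 0 l Y_blk0[OF \<rho>] \<rho>l blk_l_1[OF l] by auto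
    next
      case (Suc i'')
      then show ?thesis using \<open>i = Suc i'\<close> i Young_D(2)[OF \<rho>, of "Suc i''"] blk_l_SS[OF l] by simp
    qed
  qed
qed

lemma perm_exists:
  assumes l: "l \<le> r1" and S: "S \<subseteq> {0..<r1}" "card S = l" and n: "r1 \<le> n"
  obtains \<tau> where "\<tau> permutes {0..<n}" "\<tau> ` {0..<l} = S" "\<tau> ` {0..<r1} = {0..<r1}" "\<And>j. r1 \<le> j \<Longrightarrow> \<tau> j = j"
proof -
  have fS: "finite S" using S(1) finite_subset by blast
  obtain g1 where g1: "bij_betw g1 {0..<l} S" using finite_same_card_bij[of "{0..<l}" S] fS S(2) by auto
  have c2: "card ({0..<r1} - S) = card {l..<r1}" using S card_Diff_subset[OF fS S(1)] by simp
  obtain g2 where g2: "bij_betw g2 {l..<r1} ({0..<r1} - S)"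
    using finite_same_card_bij[of "{l..<r1}" "{0..<r1} - S"] c2 by auto
  define \<tau> where "\<tau> j = (if j < l then g1 j else if j < r1 then g2 j else j)" for j
  have t1: "bij_betw \<tau> {0..<l} S" using g1 unfolding \<tau>_def by (rule bij_betw_cong[THEN iffD1, rotated]) auto
  have t2: "bij_betw \<tau> {l..<r1} ({0..<r1} - S)" using g2 unfolding \<tau>_def
    by (rule bij_betw_cong[THEN iffD1, rotated]) auto
  have t12: "bij_betw \<tau> ({0..<l} \<union> {l..<r1}) (S \<union> ({0..<r1} - S))"
    by (rule bij_betw_combine[OF t1 t2]) auto
  have e1: "{0..<l} \<union> {l..<r1} = {0..<r1}" "S \<union> ({0..<r1} - S) = {0..<r1}" using l S(1) by auto
  have t0: "bij_betw \<tau> {0..<r1} {0..<r1}" using t12 unfolding e1 .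
  have t3: "bij_betw \<tau> {r1..<n} {r1..<n}" unfolding \<tau>_def using l by (simp add: bij_betw_def inj_on_def)
  have t4: "bij_betw \<tau> ({0..<r1} \<union> {r1..<n}) ({0..<r1} \<union> {r1..<n})"
    by (rule bij_betw_combine[OF t0 t3]) auto
  have e2: "{0..<r1} \<union> {r1..<n} = {0..<n}" using n by auto
  have "\<tau> permutes {0..<n}"
    by (rule bij_imp_permutes) (use t4 e2 l in \<open>auto simp: \<tau>_def\<close>)
  moreover have "\<tau> ` {0..<l} = S" using t1 bij_betw_imp_surj_on by blast
  moreover have "\<tau> ` {0..<r1} = {0..<r1}" using t0 bij_betw_imp_surj_on by blast
  moreover have "\<And>j. r1 \<le> j \<Longrightarrow> \<tau> j = j" unfolding \<tau>_def using l by auto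
  ultimately show ?thesis using that by blast
qed

lemma cos_subsets:
  assumes l: "l \<le> r1"
  shows "bij_betw (\<lambda>D. rep D ` {0..<l}) (cosets (Young (r1 # r)) (Young (l # (r1 - l) # r)))
           {S. S \<subseteq> {0..<r1} \<and> card S = l}"
proof -
  let ?Y = "Young (r1 # r)" and ?Yl = "Young (l # (r1 - l) # r)"
  have sub: "?Yl \<subseteq> ?Y" using Young_l_sub[OF l] .
  have repY: "rep D \<in> ?Y" if "D \<in> cosets ?Y ?Yl" for D using rep_in_G[OF pgrp_Young pgrp_Young sub that] .
  have bijY: "bij a" if "a \<in> ?Y" for a using pgrpD(4)[OF pgrp_Young that] .
  show ?thesis
  proof (rule bij_betwI')
    fix D D' assume D: "D \<in> cosets ?Y ?Yl" and D': "D' \<in> cosets ?Y ?Yl"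
    show "(rep D ` {0..<l} = rep D' ` {0..<l}) = (D = D')"
    proof
      assume e: "rep D ` {0..<l} = rep D' ` {0..<l}"
      let ?a = "rep D" and ?b = "rep D'"
      have rY: "inv ?a \<circ> ?b \<in> ?Y" using pgrpD(3,5)[OF pgrp_Young] repY D D' by blast
      have "(inv ?a \<circ> ?b) ` {0..<l} = inv ?a ` (?a ` {0..<l})" unfolding image_comp[symmetric] e ..
      also have "\<dots> = {0..<l}" using bijY[OF repY[OF D]] by (simp add: bij_is_inj image_comp inv_cancel1)
      finally have "inv ?a \<circ> ?b \<in> ?Yl" using Young_l_crit[OF l rY] by simp
      then have "lc ?a ?Yl = lc ?b ?Yl" using lc_eq_iff[OF pgrp_Young bijY[OF repY[OF D]]] by simp
      then show "D = D'" using cos_rep_lc[OF pgrp_Young D] cos_rep_lc[OF pgrp_Young D'] by simp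
    qed simp
  next
    fix D assume D: "D \<in> cosets ?Y ?Yl"
    have a: "rep D \<in> ?Y" using repY[OF D] .
    have "rep D ` {0..<l} \<subseteq> rep D ` {0..<r1}" using l by auto
    then have "rep D ` {0..<l} \<subseteq> {0..<r1}" using Y_blk0[OF a] by simp
    moreover have "card (rep D ` {0..<l}) = l"
      using card_image[OF inj_on_subset[OF bij_is_inj[OF bijY[OF a]] subset_UNIV]] by simp
    ultimately show "rep D ` {0..<l} \<in> {S. S \<subseteq> {0..<r1} \<and> card S = l}" by simp
  next
    fix S assume "S \<in> {S. S \<subseteq> {0..<r1} \<and> card S = l}"
    then have S: "S \<subseteq> {0..<r1}" "card S = l" by auto
    obtain \<tau> where \<tau>: "\<tau> permutes {0..<sum_list (r1 # r)}" "\<tau> ` {0..<l} = S" "\<tau> ` {0..<r1} = {0..<r1}"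
        "\<And>j. r1 \<le> j \<Longrightarrow> \<tau> j = j"
      using perm_exists[OF l S, of "sum_list (r1 # r)"] by auto
    have tY: "\<tau> \<in> ?Y" unfolding Young_def
    proof (intro CollectI conjI allI impI)
      show "\<tau> permutes {0..<sum_list (r1 # r)}" using \<tau>(1) .
      fix i assume "i < length (r1 # r)"
      show "\<tau> ` blk (r1 # r) i = blk (r1 # r) i"
      proof (cases i)
        case 0 then show ?thesis using \<tau>(3) by (simp add: blk_Cons_0)
      next
        case (Suc i')
        have "\<forall>j\<in>blk (r1 # r) i. \<tau> j = j" using \<tau>(4) Suc by (auto simp: blk_Cons_Suc)
        then show ?thesis by simp
      qed
    qed
    define D where "D = lc \<tau> ?Yl"
    have D: "D \<in> cosets ?Y ?Yl" unfolding D_def using tY by (rule lc_in_cos)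
    have "rep D \<in> lc \<tau> ?Yl" using cos_rep[OF pgrp_Young D] D_def by simp
    then obtain h where h: "h \<in> ?Yl" "rep D = \<tau> \<circ> h" unfolding lc_def by auto
    have "h ` {0..<l} = {0..<l}" using Young_D(2)[OF h(1), of 0] by (simp add: blk_Cons_0)
    then have "rep D ` {0..<l} = S" using h(2) \<tau>(2) by (metis image_comp)
    then show "\<exists>D\<in>cosets ?Y ?Yl. S = rep D ` {0..<l}" using D by blast
  qed
qed

lemma word_l:
  assumes \<tau>: "\<tau> \<in> Young (r1 # r)" and las: "length as = length r" and l: "l \<le> r1"
  shows "permute_list (inv \<tau>) (rep_word (l # (r1 - l) # r) (a0 # a1 # as)) =
         mix {0..<r1} (\<tau> ` {0..<l}) a0 a1 (replicate r1 b @ rep_word r as)"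
proof -
  define u where "u = rep_word r as"
  let ?n = "r1 + sum_list r"
  have sp: "\<tau> permutes {0..<?n}" using Young_D(1)[OF \<tau>] by simp
  have wl: "rep_word (l # (r1 - l) # r) (a0 # a1 # as) = replicate l a0 @ replicate (r1 - l) a1 @ u"
    unfolding u_def using las by (simp add: rep_word_Cons)
  have fx: "permute_list (inv \<tau>) (replicate r1 b @ u) = replicate r1 b @ u"
    using Young_fix_word[OF \<tau>, of "b # as"] las unfolding u_def by (simp add: rep_word_Cons)
  have lu: "length u = sum_list r" unfolding u_def by simp
  have i0: "inv \<tau> ` {0..<r1} = {0..<r1}" using inv_image_eq[OF permutes_bij[OF sp] Y_blk0[OF \<tau>]] .
  show ?thesis unfolding u_def[symmetric]
  proof (rule nth_equalityI)
    show "length (permute_list (inv \<tau>) (rep_word (l # (r1 - l) # r) (a0 # a1 # as))) =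
      length (mix {0..<r1} (\<tau> ` {0..<l}) a0 a1 (replicate r1 b @ u))" using l lu wl by simp
    fix j assume "j < length (permute_list (inv \<tau>) (rep_word (l # (r1 - l) # r) (a0 # a1 # as)))"
    then have j: "j < ?n" using l by simp
    define k where "k = inv \<tau> j"
    have k: "k < ?n" unfolding k_def using perm_lt[OF perm_inv[OF sp] j] .
    have tk: "\<tau> k = j" unfolding k_def using permutes_inverses(1)[OF sp] by simp
    have jl: "j \<in> \<tau> ` {0..<l} \<longleftrightarrow> k < l"
    proof
      assume "j \<in> \<tau> ` {0..<l}"
      then obtain k' where "k' < l" "j = \<tau> k'" by auto
      then show "k < l" unfolding k_def using permutes_inverses(2)[OF sp] by simp
    next
      assume "k < l" then show "j \<in> \<tau> ` {0..<l}" using tk by auto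
    qed
    have lhs: "permute_list (inv \<tau>) (rep_word (l # (r1 - l) # r) (a0 # a1 # as)) ! j =
        (replicate l a0 @ replicate (r1 - l) a1 @ u) ! k"
      unfolding wl permute_list_def k_def using j lu l by simp
    show "permute_list (inv \<tau>) (rep_word (l # (r1 - l) # r) (a0 # a1 # as)) ! j =
      mix {0..<r1} (\<tau> ` {0..<l}) a0 a1 (replicate r1 b @ u) ! j"
    proof (cases "j < r1")
      case True
      have "k < r1" using True i0 unfolding k_def by auto
      then show ?thesis unfolding lhs using True jl j lu l by (auto simp: mix_nth nth_append)
    next
      case False
      have kr: "\<not> k < r1"
      proof
        assume "k < r1"
        then have "\<tau> k \<in> \<tau> ` {0..<r1}" by simp
        then show False using tk False Y_blk0[OF \<tau>] by auto
      qed
      have nl: "j \<notin> \<tau> ` {0..<l}" using jl kr l by simp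
      have "(replicate r1 b @ u) ! k = (replicate r1 b @ u) ! j"
        using arg_cong[OF fx, of "\<lambda>xs. xs ! j"] j lu unfolding permute_list_def k_def by simp
      then have "u ! (k - r1) = u ! (j - r1)" using kr False by (simp add: nth_append)
      then show ?thesis unfolding lhs using False nl kr j lu l by (auto simp: mix_nth nth_append)
    qed
  qed
qed

context GO begin

lemma b5_core:
  fixes as :: "'a list"
  assumes x: "x \<in> Minv M act (r1 # r)" and las: "length as = length r"
  shows "free_gen (x, replicate r1 (a0 + a1) @ rep_word r as) -
     (\<Sum>l\<in>{0..r1}. coset_sum (Young (r1 # r)) (Young (l # (r1 - l) # r))
        (\<lambda>\<tau>. free_gen (x, permute_list (inv \<tau>) (rep_word (l # (r1 - l) # r) (a0 # a1 # as))))) \<in> R"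
proof -
  define w where "w = replicate r1 (a0 + a1) @ rep_word r as"
  define P where "P = {0..<r1}"
  let ?f = "\<lambda>S. free_gen (x, mix P S a0 a1 w) :: 'm \<times> 'a list \<Rightarrow> 'k"
  have lw: "length w = r1 + sum_list r" unfolding w_def by simp
  have xM: "x \<in> M (length w)" using Minv_M[OF x] lw by simp
  have am: "free_gen (x, w) - (\<Sum>S\<in>Pow P. ?f S) \<in> R"
    by (rule add_multi[OF xM]) (auto simp: P_def lw w_def nth_append)
  have grp0: "(\<Sum>l\<in>{0..r1}. \<Sum>S\<in>{S \<in> Pow P. card S = l}. ?f S) = (\<Sum>S\<in>Pow P. ?f S)"
  proof (rule sum.group)
    show "finite (Pow P)" unfolding P_def by simp
    show "finite {0..r1}" by simp
    show "card ` Pow P \<subseteq> {0..r1}" unfolding P_def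
      using card_mono[of "{0..<r1}"] by fastforce
  qed
  have e: "{S \<in> Pow P. card S = l} = {S. S \<subseteq> {0..<r1} \<and> card S = l}" for l unfolding P_def by auto
  have inner: "(\<Sum>S\<in>{S. S \<subseteq> {0..<r1} \<and> card S = l}. ?f S) =
      coset_sum (Young (r1 # r)) (Young (l # (r1 - l) # r))
        (\<lambda>\<tau>. free_gen (x, permute_list (inv \<tau>) (rep_word (l # (r1 - l) # r) (a0 # a1 # as))) :: 'm \<times> 'a list \<Rightarrow> 'k)"
    if l: "l \<in> {0..r1}" for l
  proof -
    have l': "l \<le> r1" using l by simp
    have sub: "Young (l # (r1 - l) # r) \<subseteq> Young (r1 # r)" using Young_l_sub[OF l'] .
    have "(\<Sum>S\<in>{S. S \<subseteq> {0..<r1} \<and> card S = l}. ?f S) =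
        (\<Sum>D\<in>cosets (Young (r1 # r)) (Young (l # (r1 - l) # r)). ?f (rep D ` {0..<l}))"
      by (rule sum.reindex_bij_betw[OF cos_subsets[OF l'], symmetric])
    also have "\<dots> = coset_sum (Young (r1 # r)) (Young (l # (r1 - l) # r))
        (\<lambda>\<tau>. free_gen (x, permute_list (inv \<tau>) (rep_word (l # (r1 - l) # r) (a0 # a1 # as))))"
      unfolding coset_sum_alt
    proof (rule sum.cong[OF refl])
      fix D assume D: "D \<in> cosets (Young (r1 # r)) (Young (l # (r1 - l) # r))"
      have "rep D \<in> Young (r1 # r)" using rep_in_G[OF pgrp_Young pgrp_Young sub D] .
      then show "?f (rep D ` {0..<l}) = free_gen (x, permute_list (inv (rep D)) (rep_word (l # (r1 - l) # r) (a0 # a1 # as)))"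
        using word_l[OF _ las l', of "rep D" a0 a1 "a0 + a1"] unfolding P_def w_def by simp
    qed
    finally show ?thesis .
  qed
  have "(\<Sum>S\<in>Pow P. ?f S) = (\<Sum>l\<in>{0..r1}. coset_sum (Young (r1 # r)) (Young (l # (r1 - l) # r))
        (\<lambda>\<tau>. free_gen (x, permute_list (inv \<tau>) (rep_word (l # (r1 - l) # r) (a0 # a1 # as))) :: 'm \<times> 'a list \<Rightarrow> 'k))"
    unfolding grp0[symmetric] e by (rule sum.cong[OF refl], rule inner)
  then show ?thesis using am unfolding w_def by simp
qed

lemma beta5:
  fixes as :: "'a list"
  assumes x: "x \<in> Minv M act (r1 # r)" and las: "length as = length r"
  shows "beta_of act F x (r1 # r) ((a0 + a1) # as) =
    (\<Sum>l\<in>{0..r1}. beta_of act F x (l # (r1 - l) # r) (a0 # a1 # as))"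
proof -
  define n where "n = sum_list (r1 # r)"
  define G where "G = Sym n"
  define Y where "Y = Young (r1 # r)"
  define Yl where "Yl l = Young (l # (r1 - l) # r)" for l
  define w where "w = replicate r1 (a0 + a1) @ rep_word r as"
  define wl where "wl l = rep_word (l # (r1 - l) # r) (a0 # a1 # as)" for l
  have sl: "sum_list (l # (r1 - l) # r) = n" if "l \<in> {0..r1}" for l using that n_def by simp
  have xM: "x \<in> M n" using Minv_M[OF x] n_def by simp
  have YG: "Y \<subseteq> G" unfolding Y_def G_def n_def by (rule Young_Sym)
  have YlY: "Yl l \<subseteq> Y" if "l \<in> {0..r1}" for l using Young_l_sub[of l r1 r] that Yl_def Y_def by simp
  have xinv: "act n \<tau> x = x" if "\<tau> \<in> Y" for \<tau> using x that unfolding Minv_iff Y_def n_def by simp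
  have xl: "x \<in> Minv M act (l # (r1 - l) # r)" if l: "l \<in> {0..r1}" for l
    unfolding Minv_iff sl[OF l] using xM xinv YlY[OF l] Yl_def by auto
  have lwl: "length (wl l) = n" if "l \<in> {0..r1}" for l using sl[OF that] wl_def by simp
  have lw: "length w = n" using w_def n_def by simp
  have las': "length (a0 # a1 # as) = length (l # (r1 - l) # r)" for l using las by simp
  have VVl: "VV x (l # (r1 - l) # r) (a0 # a1 # as) =
      coset_sum G Y (\<lambda>\<sigma>. coset_sum Y (Yl l) (\<lambda>\<tau>. W n (\<sigma> \<circ> \<tau>) x (wl l)))" if l: "l \<in> {0..r1}" for l
  proof -
    have "VV x (l # (r1 - l) # r) (a0 # a1 # as) = coset_sum G (Yl l) (\<lambda>\<sigma>. W n \<sigma> x (wl l))"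
      unfolding VV_def sl[OF l] G_def Yl_def wl_def ..
    also have "\<dots> = coset_sum G Y (\<lambda>\<sigma>. coset_sum Y (Yl l) (\<lambda>\<tau>. W n (\<sigma> \<circ> \<tau>) x (wl l)))"
    proof (rule coset_sum_tower)
      show "pgrp G" "pgrp Y" "pgrp (Yl l)" unfolding G_def Y_def Yl_def by (auto intro: pgrp_Sym pgrp_Young)
      show "Y \<subseteq> G" using YG .
      show "Yl l \<subseteq> Y" using YlY[OF l] .
      show "rinv G (Yl l) (\<lambda>\<sigma>. W n \<sigma> x (wl l))"
        using W_rinv[OF xl[OF l] las'[of l]] unfolding sl[OF l] G_def Yl_def wl_def .
    qed
    finally show ?thesis .
  qed
  have VV0: "VV x (r1 # r) ((a0 + a1) # as) = coset_sum G Y (\<lambda>\<sigma>. W n \<sigma> x w)"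
    unfolding VV_def G_def Y_def n_def w_def using las by (simp add: rep_word_Cons)
  have pt: "W n \<sigma> x w - (\<Sum>l\<in>{0..r1}. coset_sum Y (Yl l) (\<lambda>\<tau>. W n (\<sigma> \<circ> \<tau>) x (wl l))) \<in> R"
    if \<sigma>: "\<sigma> \<in> G" for \<sigma>
  proof -
    have sp: "\<sigma> permutes {0..<n}" using \<sigma> G_def Sym_iff by simp
    let ?P = "push (gen_act act n \<sigma>)"
    define E where "E = free_gen (x, w) - (\<Sum>l\<in>{0..r1}. coset_sum Y (Yl l)
        (\<lambda>\<tau>. free_gen (x, permute_list (inv \<tau>) (wl l)) :: 'm \<times> 'a list \<Rightarrow> 'k))"
    have ER: "E \<in> R" unfolding E_def w_def Y_def Yl_def wl_def using b5_core[OF x las] .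
    have fin1: "finite (fsupp (coset_sum Y (Yl l) (\<lambda>\<tau>. free_gen (x, permute_list (inv \<tau>) (wl l)) :: 'm \<times> 'a list \<Rightarrow> 'k)))" for l
      unfolding coset_sum_alt by (rule fin_sum) (auto simp: finite_cos pgrp_Young Y_def)
    have "?P E = ?P (free_gen (x, w)) - (\<Sum>l\<in>{0..r1}. ?P (coset_sum Y (Yl l)
        (\<lambda>\<tau>. free_gen (x, permute_list (inv \<tau>) (wl l)) :: 'm \<times> 'a list \<Rightarrow> 'k)))"
      unfolding E_def
      by (simp add: push_diff push_sum fin1 fin_sum)
    also have "\<dots> = W n \<sigma> x w - (\<Sum>l\<in>{0..r1}. coset_sum Y (Yl l) (\<lambda>\<tau>. W n (\<sigma> \<circ> \<tau>) x (wl l)))"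
    proof -
      have a: "?P (free_gen (x, w)) = W n \<sigma> x w" unfolding W_def push_free_gen using lw by (simp add: gen_act_n)
      have b: "?P (coset_sum Y (Yl l) (\<lambda>\<tau>. free_gen (x, permute_list (inv \<tau>) (wl l)) :: 'm \<times> 'a list \<Rightarrow> 'k)) =
          coset_sum Y (Yl l) (\<lambda>\<tau>. W n (\<sigma> \<circ> \<tau>) x (wl l))" if l: "l \<in> {0..r1}" for l
      proof -
        have "?P (coset_sum Y (Yl l) (\<lambda>\<tau>. free_gen (x, permute_list (inv \<tau>) (wl l)) :: 'm \<times> 'a list \<Rightarrow> 'k)) =
          (\<Sum>D\<in>cosets Y (Yl l). ?P (free_gen (x, permute_list (inv (rep D)) (wl l))))"
          unfolding coset_sum_alt by (rule push_sum) (auto simp: finite_cos pgrp_Young Y_def)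
        also have "\<dots> = coset_sum Y (Yl l) (\<lambda>\<tau>. W n (\<sigma> \<circ> \<tau>) x (wl l))"
          unfolding coset_sum_alt
        proof (rule sum.cong[OF refl])
          fix D assume D: "D \<in> cosets Y (Yl l)"
          have rY: "rep D \<in> Y" using rep_in_G[OF _ _ YlY[OF l] D] pgrp_Young Y_def Yl_def by simp
          have rG: "rep D \<in> G" using rY YG by blast
          have "free_gen (x, permute_list (inv (rep D)) (wl l)) = W n (rep D) x (wl l)"
            unfolding W_def using xinv[OF rY] by simp
          then show "?P (free_gen (x, permute_list (inv (rep D)) (wl l))) = W n (\<sigma> \<circ> rep D) x (wl l)"
            using W_push[OF \<sigma>[unfolded G_def] rG[unfolded G_def] xM lwl[OF l]] by simp
        qed
        finally show ?thesis .
      qed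
      show ?thesis unfolding a using b by simp
    qed
    finally have "?P E = W n \<sigma> x w - (\<Sum>l\<in>{0..r1}. coset_sum Y (Yl l) (\<lambda>\<tau>. W n (\<sigma> \<circ> \<tau>) x (wl l)))" .
    then show ?thesis using P_R[OF sp ER] by simp
  qed
  have "VV x (r1 # r) ((a0 + a1) # as) - (\<Sum>l\<in>{0..r1}. VV x (l # (r1 - l) # r) (a0 # a1 # as)) =
      coset_sum G Y (\<lambda>\<sigma>. W n \<sigma> x w - (\<Sum>l\<in>{0..r1}. coset_sum Y (Yl l) (\<lambda>\<tau>. W n (\<sigma> \<circ> \<tau>) x (wl l))))"
    unfolding VV0 coset_sum_diff coset_sum_sum[OF finite_atLeastAtMost] using VVl by simp
  also have "\<dots> \<in> R" unfolding coset_sum_alt[of G Y]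
    by (rule R_sum, rule pt, rule rep_in_G[OF _ _ YG]) (auto simp: G_def Y_def pgrp_Sym pgrp_Young)
  finally have d: "VV x (r1 # r) ((a0 + a1) # as) - (\<Sum>l\<in>{0..r1}. VV x (l # (r1 - l) # r) (a0 # a1 # as)) \<in> R" .
  have iv: "VV x (l # (r1 - l) # r) (a0 # a1 # as) \<in> Iv" if "l \<in> {0..r1}" for l
    using VV_Iv[OF xl[OF that] las'] .
  have "F (VV x (r1 # r) ((a0 + a1) # as)) = F (\<Sum>l\<in>{0..r1}. VV x (l # (r1 - l) # r) (a0 # a1 # as))"
    by (rule F_eq(1)[OF Iv_sum[OF finite_atLeastAtMost iv] d])
  also have "\<dots> = (\<Sum>l\<in>{0..r1}. F (VV x (l # (r1 - l) # r) (a0 # a1 # as)))"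
    by (rule F_sum[OF finite_atLeastAtMost iv])
  finally show ?thesis unfolding beta_of_VV .
qed

end


lemma comp_perm_len[simp]: "length (comp_perm \<rho> r) = length r"
  unfolding comp_perm_def by simp

lemma comp_perm_sum:
  assumes "\<rho> permutes {0..<length r}"
  shows "sum_list (comp_perm \<rho> (r :: nat list)) = sum_list r"
proof -
  have "inv \<rho> permutes {..<length r}" using permutes_inv[OF assms] by (simp add: atLeast0LessThan)
  then have "mset (comp_perm \<rho> r) = mset r" unfolding comp_perm_def by simp
  then show ?thesis by (metis sum_mset_sum_list)
qed

lemma comp_perm_nth:
  assumes "\<rho> permutes {0..<length r}" "i < length r"
  shows "comp_perm \<rho> r ! (\<rho> i) = r ! i"
  using permute_list_inv_at[OF assms] unfolding comp_perm_def .

lemma comp_perm_nth':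
  assumes "\<rho> permutes {0..<length r}" "i' < length r"
  shows "comp_perm \<rho> r ! i' = r ! (inv \<rho> i')"
  using assms unfolding comp_perm_def permute_list_def by simp

lemma the_blk: "i < length r \<Longrightarrow> j \<in> blk r i \<Longrightarrow> (THE i. i < length r \<and> j \<in> blk r i) = i"
  by (rule the_equality) (auto intro: blk_unique)

lemma block_perm_blk:
  assumes "i < length r" "j \<in> blk r i"
  shows "block_perm r \<rho> j = st (comp_perm \<rho> r) (\<rho> i) + (j - st r i)"
proof -
  have "j < sum_list r" using blk_sub[of r i] assms(2) by auto
  then show ?thesis unfolding block_perm_def using the_blk[OF assms] by (simp add: Let_def)
qed

lemma block_perm_out: "\<not> j < sum_list r \<Longrightarrow> block_perm r \<rho> j = j"
  unfolding block_perm_def by simp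

lemma block_perm_image:
  assumes \<rho>: "\<rho> permutes {0..<length r}" and i: "i < length r"
  shows "block_perm r \<rho> ` blk r i = blk (comp_perm \<rho> r) (\<rho> i)"
proof -
  let ?a = "st r i" and ?b = "st (comp_perm \<rho> r) (\<rho> i)" and ?m = "r ! i"
  have ri: "\<rho> i < length r" using perm_lt[OF \<rho> i] .
  have B1: "blk r i = {?a ..< ?a + ?m}" unfolding blk_def using i by (simp add: st_Suc)
  have B2: "blk (comp_perm \<rho> r) (\<rho> i) = {?b ..< ?b + ?m}" unfolding blk_def
    using ri comp_perm_nth[OF \<rho> i] by (simp add: st_Suc)
  have "block_perm r \<rho> ` blk r i = (\<lambda>j. ?b + (j - ?a)) ` {?a ..< ?a + ?m}"
    unfolding B1 using block_perm_blk[OF i] B1 by (intro image_cong) auto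
  also have "\<dots> = {?b ..< ?b + ?m}"
  proof
    show "(\<lambda>j. ?b + (j - ?a)) ` {?a ..< ?a + ?m} \<subseteq> {?b ..< ?b + ?m}" by auto
    show "{?b ..< ?b + ?m} \<subseteq> (\<lambda>j. ?b + (j - ?a)) ` {?a ..< ?a + ?m}"
    proof
      fix k assume k: "k \<in> {?b ..< ?b + ?m}"
      then have "k = ?b + ((?a + (k - ?b)) - ?a)" "?a + (k - ?b) \<in> {?a ..< ?a + ?m}" by auto
      then show "k \<in> (\<lambda>j. ?b + (j - ?a)) ` {?a ..< ?a + ?m}" by blast
    qed
  qed
  finally show ?thesis using B2 by simp
qed

lemma block_perm_permutes:
  assumes \<rho>: "\<rho> permutes {0..<length r}"
  shows "block_perm r \<rho> permutes {0..<sum_list r}"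
proof -
  let ?\<pi> = "block_perm r \<rho>" and ?r = "comp_perm \<rho> r" and ?n = "sum_list r"
  have sr: "sum_list ?r = ?n" using comp_perm_sum[OF \<rho>] .
  have into: "?\<pi> ` {0..<?n} \<subseteq> {0..<?n}"
  proof
    fix k assume "k \<in> ?\<pi> ` {0..<?n}"
    then obtain j where j: "j < ?n" "k = ?\<pi> j" by auto
    obtain i where i: "i < length r" "j \<in> blk r i" using blk_cover[OF j(1)] by blast
    have "k \<in> blk ?r (\<rho> i)" using block_perm_image[OF \<rho> i(1)] i(2) j(2) by blast
    then show "k \<in> {0..<?n}" using blk_sub[of ?r "\<rho> i"] sr by auto
  qed
  have inj: "inj_on ?\<pi> {0..<?n}"
  proof (rule inj_onI)
    fix j j' assume j: "j \<in> {0..<?n}" and j': "j' \<in> {0..<?n}" and e: "?\<pi> j = ?\<pi> j'"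
    obtain i where i: "i < length r" "j \<in> blk r i" using blk_cover[of j r] j by auto
    obtain i' where i': "i' < length r" "j' \<in> blk r i'" using blk_cover[of j' r] j' by auto
    have "?\<pi> j \<in> blk ?r (\<rho> i)" using block_perm_image[OF \<rho> i(1)] i(2) by blast
    moreover have "?\<pi> j \<in> blk ?r (\<rho> i')" using block_perm_image[OF \<rho> i'(1)] i'(2) e by (metis imageI)
    ultimately have "\<rho> i = \<rho> i'"
      using blk_unique[of "\<rho> i" ?r "\<rho> i'"] perm_lt[OF \<rho>] i(1) i'(1) by simp
    then have ii: "i = i'" using permutes_inj[OF \<rho>] by (meson injD)
    show "j = j'" using e block_perm_blk[OF i] block_perm_blk[OF i'] unfolding ii
      using i(2) i'(2) ii unfolding blk_def by auto
  qed
  have "?\<pi> ` {0..<?n} = {0..<?n}" using endo_inj_surj[OF _ into inj] by simp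
  then have "bij_betw ?\<pi> {0..<?n} {0..<?n}" using inj by (simp add: bij_betw_def)
  then show ?thesis by (rule bij_imp_permutes) (simp add: block_perm_out)
qed

lemma inv_img: "bij f \<Longrightarrow> inv f ` (f ` B) = B"
  by (simp add: bij_is_inj image_comp inv_cancel1)

lemma block_perm_inv_blk:
  assumes \<rho>: "\<rho> permutes {0..<length r}" and i: "i < length r" and k: "k \<in> blk (comp_perm \<rho> r) (\<rho> i)"
  shows "inv (block_perm r \<rho>) k \<in> blk r i"
proof -
  have bp: "bij (block_perm r \<rho>)" using permutes_bij[OF block_perm_permutes[OF \<rho>]] .
  have "inv (block_perm r \<rho>) k \<in> inv (block_perm r \<rho>) ` (block_perm r \<rho> ` blk r i)"
    using k block_perm_image[OF \<rho> i] by simp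
  then show ?thesis using inv_img[OF bp] by simp
qed

lemma block_perm_word:
  assumes \<rho>: "\<rho> permutes {0..<length r}" and l: "length as = length r"
  shows "permute_list (inv (block_perm r \<rho>)) (rep_word r as) = rep_word (comp_perm \<rho> r) (comp_perm \<rho> as)"
proof (rule nth_equalityI)
  let ?r = "comp_perm \<rho> r"
  have sr: "sum_list ?r = sum_list r" using comp_perm_sum[OF \<rho>] .
  show "length (permute_list (inv (block_perm r \<rho>)) (rep_word r as)) = length (rep_word ?r (comp_perm \<rho> as))"
    using sr by simp
  fix k assume "k < length (permute_list (inv (block_perm r \<rho>)) (rep_word r as))"
  then have k: "k < sum_list ?r" using sr by simp
  obtain i' where i': "i' < length ?r" "k \<in> blk ?r i'" using blk_cover[OF k] by blast
  define i where "i = inv \<rho> i'"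
  have ii: "\<rho> i = i'" unfolding i_def using permutes_inverses(1)[OF \<rho>] by simp
  have i: "i < length r" unfolding i_def using perm_lt[OF perm_inv[OF \<rho>]] i'(1) by simp
  have kk: "inv (block_perm r \<rho>) k \<in> blk r i" using block_perm_inv_blk[OF \<rho> i] i'(2) ii by simp
  have "permute_list (inv (block_perm r \<rho>)) (rep_word r as) ! k = rep_word r as ! (inv (block_perm r \<rho>) k)"
    using k sr unfolding permute_list_def by simp
  also have "\<dots> = as ! i" using rep_word_blk[OF l i kk] .
  also have "\<dots> = comp_perm \<rho> as ! i'" using comp_perm_nth'[of \<rho> as i'] \<rho> l i'(1) i_def by simp
  also have "\<dots> = rep_word ?r (comp_perm \<rho> as) ! k" using rep_word_blk[of "comp_perm \<rho> as" ?r i' k] l i' by simp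
  finally show "permute_list (inv (block_perm r \<rho>)) (rep_word r as) ! k = rep_word ?r (comp_perm \<rho> as) ! k" .
qed

lemma Young_conj1:
  assumes \<rho>: "\<rho> permutes {0..<length r}" and \<tau>: "\<tau> \<in> Young r"
  shows "block_perm r \<rho> \<circ> \<tau> \<circ> inv (block_perm r \<rho>) \<in> Young (comp_perm \<rho> r)"
  unfolding Young_def
proof (intro CollectI conjI allI impI)
  let ?\<pi> = "block_perm r \<rho>" and ?r = "comp_perm \<rho> r"
  have pp: "?\<pi> permutes {0..<sum_list r}" using block_perm_permutes[OF \<rho>] .
  show "?\<pi> \<circ> \<tau> \<circ> inv ?\<pi> permutes {0..<sum_list ?r}"
    using comp_perm_sum[OF \<rho>] pp Young_D(1)[OF \<tau>] by (simp add: permutes_compose permutes_inv)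
  fix i' assume "i' < length ?r"
  then have i'l: "i' < length r" by simp
  define i where "i = inv \<rho> i'"
  have ii: "\<rho> i = i'" unfolding i_def using permutes_inverses(1)[OF \<rho>] by simp
  have i: "i < length r" unfolding i_def using perm_lt[OF perm_inv[OF \<rho>]] i'l by simp
  have B: "blk ?r i' = ?\<pi> ` blk r i" using block_perm_image[OF \<rho> i] ii by simp
  have "(?\<pi> \<circ> \<tau> \<circ> inv ?\<pi>) ` blk ?r i' = ?\<pi> ` (\<tau> ` (inv ?\<pi> ` (?\<pi> ` blk r i)))"
    unfolding B by (simp add: image_comp)
  also have "\<dots> = ?\<pi> ` (\<tau> ` blk r i)" using inv_img[OF permutes_bij[OF pp]] by simp
  also have "\<dots> = blk ?r i'" using Young_D(2)[OF \<tau> i] B by simp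
  finally show "(?\<pi> \<circ> \<tau> \<circ> inv ?\<pi>) ` blk ?r i' = blk ?r i'" .
qed

lemma Young_conj2:
  assumes \<rho>: "\<rho> permutes {0..<length r}" and \<tau>: "\<tau> \<in> Young (comp_perm \<rho> r)"
  shows "inv (block_perm r \<rho>) \<circ> \<tau> \<circ> block_perm r \<rho> \<in> Young r"
  unfolding Young_def
proof (intro CollectI conjI allI impI)
  let ?\<pi> = "block_perm r \<rho>" and ?r = "comp_perm \<rho> r"
  have pp: "?\<pi> permutes {0..<sum_list r}" using block_perm_permutes[OF \<rho>] .
  show "inv ?\<pi> \<circ> \<tau> \<circ> ?\<pi> permutes {0..<sum_list r}"
    using comp_perm_sum[OF \<rho>] pp Young_D(1)[OF \<tau>] by (simp add: permutes_compose permutes_inv)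
  fix i assume i: "i < length r"
  have B: "?\<pi> ` blk r i = blk ?r (\<rho> i)" using block_perm_image[OF \<rho> i] .
  have ri: "\<rho> i < length ?r" using perm_lt[OF \<rho> i] by simp
  have "(inv ?\<pi> \<circ> \<tau> \<circ> ?\<pi>) ` blk r i = inv ?\<pi> ` (\<tau> ` (?\<pi> ` blk r i))"
    by (simp add: image_comp)
  also have "\<dots> = inv ?\<pi> ` (?\<pi> ` blk r i)" unfolding B using Young_D(2)[OF \<tau> ri] by simp
  also have "\<dots> = blk r i" using inv_img[OF permutes_bij[OF pp]] by simp
  finally show "(inv ?\<pi> \<circ> \<tau> \<circ> ?\<pi>) ` blk r i = blk r i" .
qed

lemma lc_conj:
  assumes \<rho>: "\<rho> permutes {0..<length r}"
  shows "(\<lambda>s. s \<circ> block_perm r \<rho>) ` lc \<sigma> (Young (comp_perm \<rho> r)) = lc (\<sigma> \<circ> block_perm r \<rho>) (Young r)"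
proof -
  let ?\<pi> = "block_perm r \<rho>"
  have bp: "bij ?\<pi>" using permutes_bij[OF block_perm_permutes[OF \<rho>]] .
  show ?thesis
  proof
    show "(\<lambda>s. s \<circ> ?\<pi>) ` lc \<sigma> (Young (comp_perm \<rho> r)) \<subseteq> lc (\<sigma> \<circ> ?\<pi>) (Young r)"
    proof
      fix t assume "t \<in> (\<lambda>s. s \<circ> ?\<pi>) ` lc \<sigma> (Young (comp_perm \<rho> r))"
      then obtain \<tau>' where \<tau>': "\<tau>' \<in> Young (comp_perm \<rho> r)" "t = \<sigma> \<circ> \<tau>' \<circ> ?\<pi>" unfolding lc_def by auto
      have "(\<sigma> \<circ> ?\<pi>) \<circ> (inv ?\<pi> \<circ> \<tau>' \<circ> ?\<pi>) = \<sigma> \<circ> (?\<pi> \<circ> inv ?\<pi>) \<circ> \<tau>' \<circ> ?\<pi>" by (simp add: comp_assoc)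
      then have "t = (\<sigma> \<circ> ?\<pi>) \<circ> (inv ?\<pi> \<circ> \<tau>' \<circ> ?\<pi>)" using \<tau>'(2) inv_cancel2[OF bp] by simp
      moreover have "inv ?\<pi> \<circ> \<tau>' \<circ> ?\<pi> \<in> Young r" using Young_conj2[OF \<rho> \<tau>'(1)] .
      ultimately show "t \<in> lc (\<sigma> \<circ> ?\<pi>) (Young r)" unfolding lc_def by blast
    qed
    show "lc (\<sigma> \<circ> ?\<pi>) (Young r) \<subseteq> (\<lambda>s. s \<circ> ?\<pi>) ` lc \<sigma> (Young (comp_perm \<rho> r))"
    proof
      fix t assume "t \<in> lc (\<sigma> \<circ> ?\<pi>) (Young r)"
      then obtain \<tau> where \<tau>: "\<tau> \<in> Young r" "t = \<sigma> \<circ> ?\<pi> \<circ> \<tau>" unfolding lc_def by auto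
      have "(\<sigma> \<circ> (?\<pi> \<circ> \<tau> \<circ> inv ?\<pi>)) \<circ> ?\<pi> = \<sigma> \<circ> ?\<pi> \<circ> \<tau> \<circ> (inv ?\<pi> \<circ> ?\<pi>)" by (simp add: comp_assoc)
      then have "t = (\<sigma> \<circ> (?\<pi> \<circ> \<tau> \<circ> inv ?\<pi>)) \<circ> ?\<pi>" using \<tau>(2) inv_cancel1[OF bp] by simp
      moreover have "?\<pi> \<circ> \<tau> \<circ> inv ?\<pi> \<in> Young (comp_perm \<rho> r)" using Young_conj1[OF \<rho> \<tau>(1)] .
      ultimately show "t \<in> (\<lambda>s. s \<circ> ?\<pi>) ` lc \<sigma> (Young (comp_perm \<rho> r))" unfolding lc_def by blast
    qed
  qed
qed

lemma rc_rc: "bij \<pi> \<Longrightarrow> (\<lambda>s. s \<circ> inv \<pi>) ` ((\<lambda>s. s \<circ> \<pi>) ` C) = C"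
  by (simp add: image_comp comp_def[of "\<lambda>s. s \<circ> inv \<pi>"] comp_assoc inv_cancel2)
lemma rc_rc': "bij \<pi> \<Longrightarrow> (\<lambda>s. s \<circ> \<pi>) ` ((\<lambda>s. s \<circ> inv \<pi>) ` C) = C"
  by (simp add: image_comp comp_def[of "\<lambda>s. s \<circ> \<pi>"] comp_assoc inv_cancel1)

context GO begin

lemma beta1:
  fixes as :: "'a list"
  assumes x: "x \<in> Minv M act r" and l: "length as = length r" and \<rho>: "\<rho> permutes {0..<length r}"
  shows "beta_of act F x r as =
    beta_of act F (act (sum_list r) (block_perm r \<rho>) x) (comp_perm \<rho> r) (comp_perm \<rho> as)"
proof -
  let ?\<pi> = "block_perm r \<rho>" and ?r = "comp_perm \<rho> r"
  define n where "n = sum_list r"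
  define w where "w = rep_word r as"
  define G where "G = Sym n"
  let ?Y = "Young r" and ?Y' = "Young ?r"
  have sr: "sum_list ?r = n" using comp_perm_sum[OF \<rho>] n_def by simp
  have \<pi>G: "?\<pi> \<in> G" using block_perm_permutes[OF \<rho>] G_def n_def Sym_iff by simp
  have bp: "bij ?\<pi>" using pgrpD(4)[OF pgrp_Sym] \<pi>G G_def by simp
  have ipG: "inv ?\<pi> \<in> G" using pgrpD(5)[OF pgrp_Sym] \<pi>G G_def by simp
  have xM: "x \<in> M n" using Minv_M[OF x] n_def by simp
  have lw: "length w = n" unfolding w_def n_def by simp
  have ww: "rep_word ?r (comp_perm \<rho> as) = permute_list (inv ?\<pi>) w"
    unfolding w_def using block_perm_word[OF \<rho> l] by simp
  have Y'G: "?Y' \<subseteq> G" using Young_Sym[of ?r] sr G_def by simp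
  have YG: "?Y \<subseteq> G" using Young_Sym[of r] n_def G_def by simp
  have "VV (act n ?\<pi> x) ?r (comp_perm \<rho> as) = coset_sum G ?Y' (\<lambda>\<sigma>. W n \<sigma> (act n ?\<pi> x) (permute_list (inv ?\<pi>) w))"
    unfolding VV_def sr ww G_def ..
  also have "\<dots> = coset_sum G ?Y' (\<lambda>\<sigma>. W n (\<sigma> \<circ> ?\<pi>) x w)"
    unfolding coset_sum_alt
  proof (rule sum.cong[OF refl])
    fix C assume C: "C \<in> cosets G ?Y'"
    have rG: "rep C \<in> G" using rep_in_G[OF _ pgrp_Young Y'G C] pgrp_Sym G_def by simp
    show "W n (rep C) (act n ?\<pi> x) (permute_list (inv ?\<pi>) w) = W n (rep C \<circ> ?\<pi>) x w"
      using W_comp[OF rG[unfolded G_def] \<pi>G[unfolded G_def] xM lw] unfolding W_def by simp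
  qed
  also have "\<dots> = coset_sum G ?Y (\<lambda>\<sigma>. W n \<sigma> x w)"
  proof (rule coset_sum_reindex[where \<Phi> = "\<lambda>C. (\<lambda>s. s \<circ> ?\<pi>) ` C"])
    show "pgrp G" "pgrp ?Y" "?Y \<subseteq> G" using pgrp_Sym pgrp_Young YG G_def by auto
    show "rinv G ?Y (\<lambda>\<sigma>. W n \<sigma> x w)" using W_rinv[OF x l] unfolding n_def G_def w_def .
    have img: "(\<lambda>C. (\<lambda>s. s \<circ> ?\<pi>) ` C) (lc \<sigma> ?Y') = lc (\<sigma> \<circ> ?\<pi>) ?Y" for \<sigma> using lc_conj[OF \<rho>] by simp
    show "bij_betw (\<lambda>C. (\<lambda>s. s \<circ> ?\<pi>) ` C) (cosets G ?Y') (cosets G ?Y)"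
    proof (rule bij_betw_byWitness[where f' = "\<lambda>C. (\<lambda>s. s \<circ> inv ?\<pi>) ` C"])
      show "\<forall>a\<in>cosets G ?Y'. (\<lambda>s. s \<circ> inv ?\<pi>) ` (\<lambda>s. s \<circ> ?\<pi>) ` a = a" using rc_rc[OF bp] by blast
      show "\<forall>a\<in>cosets G ?Y. (\<lambda>s. s \<circ> ?\<pi>) ` (\<lambda>s. s \<circ> inv ?\<pi>) ` a = a" using rc_rc'[OF bp] by blast
      show "(\<lambda>C. (\<lambda>s. s \<circ> ?\<pi>) ` C) ` cosets G ?Y' \<subseteq> cosets G ?Y"
      proof
        fix D assume "D \<in> (\<lambda>C. (\<lambda>s. s \<circ> ?\<pi>) ` C) ` cosets G ?Y'"
        then obtain \<sigma> where "\<sigma> \<in> G" "D = (\<lambda>s. s \<circ> ?\<pi>) ` lc \<sigma> ?Y'" unfolding cosets_def by auto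
        then show "D \<in> cosets G ?Y" using img[of \<sigma>] lc_in_cos pgrpD(3)[OF pgrp_Sym] \<pi>G G_def by auto
      qed
      show "(\<lambda>C. (\<lambda>s. s \<circ> inv ?\<pi>) ` C) ` cosets G ?Y \<subseteq> cosets G ?Y'"
      proof
        fix D assume "D \<in> (\<lambda>C. (\<lambda>s. s \<circ> inv ?\<pi>) ` C) ` cosets G ?Y"
        then obtain \<sigma> where \<sigma>: "\<sigma> \<in> G" "D = (\<lambda>s. s \<circ> inv ?\<pi>) ` lc \<sigma> ?Y" unfolding cosets_def by auto
        have "lc \<sigma> ?Y = lc ((\<sigma> \<circ> inv ?\<pi>) \<circ> ?\<pi>) ?Y" using inv_cancel1[OF bp] by (simp add: comp_assoc)
        also have "\<dots> = (\<lambda>s. s \<circ> ?\<pi>) ` lc (\<sigma> \<circ> inv ?\<pi>) ?Y'" using img[of "\<sigma> \<circ> inv ?\<pi>"] by simp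
        finally have "D = lc (\<sigma> \<circ> inv ?\<pi>) ?Y'" using \<sigma>(2) rc_rc[OF bp] by simp
        moreover have "\<sigma> \<circ> inv ?\<pi> \<in> G" using pgrpD(3)[OF pgrp_Sym] \<sigma>(1) ipG G_def by simp
        ultimately show "D \<in> cosets G ?Y'" using lc_in_cos by simp
      qed
    qed
    fix C assume C: "C \<in> cosets G ?Y'"
    have "rep C \<in> C" using cos_rep[OF pgrp_Young C] .
    then show "rep C \<circ> ?\<pi> \<in> (\<lambda>s. s \<circ> ?\<pi>) ` C" by (rule imageI)
  qed
  also have "\<dots> = VV x r as" unfolding VV_def n_def G_def w_def ..
  finally show ?thesis unfolding beta_of_VV n_def by simp
qed

end


theorem proposition3p5:
  fixes sM :: "'k::field \<Rightarrow> 'm::ab_group_add \<Rightarrow> 'm"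
    and M :: "nat \<Rightarrow> 'm set"
    and act :: "nat \<Rightarrow> (nat \<Rightarrow> nat) \<Rightarrow> 'm \<Rightarrow> 'm"
  assumes "sigma_module sM M act"
  shows "(\<forall>(sA :: 'k \<Rightarrow> 'a::ab_group_add \<Rightarrow> 'a) F.
            gamma_obj sM M act sA F \<longrightarrow> beta_obj sM M act sA (beta_of act F))
       \<and> (\<forall>(sA :: 'k \<Rightarrow> 'a::ab_group_add \<Rightarrow> 'a) F (sB :: 'k \<Rightarrow> 'b::ab_group_add \<Rightarrow> 'b) F' g.
            gamma_obj sM M act sA F \<longrightarrow> gamma_obj sM M act sB F' \<longrightarrow>
            gamma_mor sM M act sA F sB F' g \<longrightarrow>
            beta_mor sM M act sA (beta_of act F) sB (beta_of act F') g)"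
proof (intro conjI allI impI)
  fix sA :: "'k \<Rightarrow> 'a::ab_group_add \<Rightarrow> 'a" and F
  assume go: "gamma_obj sM M act sA F"
  have "GO sM M act sA F" using assms go
    by (simp add: GO_def GA_def SM_def GA_axioms_def GO_axioms_def gamma_obj_def)
  then interpret GO sM M act sA F .
  show "beta_obj sM M act sA (beta_of act F)"
    unfolding beta_obj_def
  proof (intro conjI allI impI)
    show "vector_space sA" by (rule vsA)
  next
    fix r x and as :: "'a list" and \<rho>
    assume "x \<in> Minv M act r" "length as = length r" "\<rho> permutes {0..<length r}"
    then show "beta_of act F x r as =
      beta_of act F (act (sum_list r) (block_perm r \<rho>) x) (comp_perm \<rho> r) (comp_perm \<rho> as)"
      by (rule beta1)
  next
    fix r x a0 and as :: "'a list"
    assume "x \<in> Minv M act (0 # r)" "length as = length r"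
    then show "beta_of act F x (0 # r) (a0 # as) = beta_of act F x r as" using beta2 by simp
  next
    fix r1 r x c a1 and as :: "'a list"
    assume "x \<in> Minv M act (r1 # r)" "length as = length r"
    then show "beta_of act F x (r1 # r) (sA c a1 # as) = sA (c ^ r1) (beta_of act F x (r1 # r) (a1 # as))"
      by (rule beta3)
  next
    fix r q x and as :: "'a list"
    assume "x \<in> Minv M act r" "q \<in> Comp (length as) (length r)"
    then show "beta_of act F x r (rep_word q as) =
      beta_of act F (coset_sum (Young (comp_merge q r)) (Young r) (\<lambda>\<sigma>. act (sum_list r) \<sigma> x)) (comp_merge q r) as"
      by (rule beta4)
  next
    fix r1 r x a0 a1 and as :: "'a list"
    assume "x \<in> Minv M act (r1 # r)" "length as = length r"
    then show "beta_of act F x (r1 # r) ((a0 + a1) # as) =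
      (\<Sum>l\<in>{0..r1}. beta_of act F x (l # (r1 - l) # r) (a0 # a1 # as))"
      by (rule beta5)
  next
    fix r x y c and as :: "'a list"
    assume "x \<in> Minv M act r" "y \<in> Minv M act r" "length as = length r"
    then show "beta_of act F (sM c x + y) r as = sA c (beta_of act F x r as) + beta_of act F y r as"
      by (rule beta6)
  qed
next
  fix sA :: "'k \<Rightarrow> 'a::ab_group_add \<Rightarrow> 'a" and F and sB :: "'k \<Rightarrow> 'b::ab_group_add \<Rightarrow> 'b" and F' g
  assume go: "gamma_obj sM M act sA F" and go': "gamma_obj sM M act sB F'"
    and gm: "gamma_mor sM M act sA F sB F' g"
  have "GO sM M act sA F" using assms go
    by (simp add: GO_def GA_def SM_def GA_axioms_def GO_axioms_def gamma_obj_def)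
  then interpret GO sM M act sA F .
  show "beta_mor sM M act sA (beta_of act F) sB (beta_of act F') g"
    unfolding beta_mor_def
  proof (intro conjI allI impI)
    show "Vector_Spaces.linear sA sB g" using gm unfolding gamma_mor_def by simp
    fix r x and as :: "'a list"
    assume x: "x \<in> Minv M act r" and l: "length as = length r"
    have iv: "VV x r as \<in> Inv sM M act sA" using VV_Iv[OF x l] unfolding Iv_def .
    have "F' (gamma_map g (VV x r as)) = g (F (VV x r as))" using gm iv unfolding gamma_mor_def by blast
    then show "g (beta_of act F x r as) = beta_of act F' x r (map g as)"
      unfolding beta_of_VV gamma_map_VV[OF l] by simp
  qed
qed


end
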